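(* Let $\alpha\in(1,2)$ and let $p\ge2$ be an integer. There is a constant $C^R_{p,\alpha}$ depending only on $p$ and $\alpha$ such that for every $n\ge1$, $$\|n^{-\alpha}A_n^R\|_q\le C^R_{p,\alpha},\qquad q\in\{1,2,\infty\}.$$
   Context: Fix integers $p\ge2$, $n\ge1$. The uniform open knot sequence on $[0,1]$ is $\xi_1=\dots=\xi_{p+1}=0$, $\xi_{i+p+1}=i/n$ for $i=0,\dots,n$, $\xi_{p+n+1}=\dots=\xi_{2p+n+1}=1$. The B-splines are defined by $N^0_i=\mathbf 1_{[\xi_i,\xi_{i+1})}$ and $N^k_i(x)=\frac{x-\xi_i}{\xi_{i+k}-\xi_i}N^{k-1}_i(x)+\frac{\xi_{i+k+1}-x}{\xi_{i+k+1}-\xi_{i+1}}N^{k-1}_{i+1}(x)$ (fractions with zero denominator are zero); $N^p_i$, $i=1,\dots,n+p$, are the degree-$p$ B-splines. The Greville abscissae are $\eta_i=\frac{\xi_{i+1}+\dots+\xi_{i+p}}{p}$, $i=2,\dots,n+p-1$. For $\alpha\in(1,2)$ the right Riemann–Liouville derivative on $[0,1]$ is $D^\alpha_{x,1}u(x)=\frac{1}{\Gamma(2-\alpha)}\frac{d^2}{dx^2}\int_x^1(y-x)^{1-\alpha}u(y)\,dy$. $A_n^R$ is the $(n+p-2)\times(n+p-2)$ matrix with $(A_n^R)_{i,j}=D^\alpha_{x,1}N^p_{j+1}(\eta_{i+1})$. $\|\cdot\|_1$, $\|\cdot\|_\infty$ are the maximum absolute column sum and row sum norms, $\|\cdot\|_2$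 the spectral norm. *)

theory Defs
  imports "HOL-Analysis.Analysis"
begin

text \<open>Uniform open knot vector on [0,1], 1-indexed:
  xi_1 = ... = xi_{p+1} = 0, xi_{i+p+1} = i/n (i = 0..n), xi_{p+n+1} = ... = xi_{2p+n+1} = 1.\<close>
definition knot :: "nat \<Rightarrow> nat \<Rightarrow> nat \<Rightarrow> real" where
  "knot p n i = (if i \<le> p + 1 then 0
                 else if i \<le> p + n + 1 then real (i - (p + 1)) / real n
                 else 1)"

text \<open>B-splines N^k_i via Cox--de Boor recursion; division by zero yields 0 in Isabelle,
  matching the convention that fractions with zero denominator are zero.\<close>
fun bspline :: "nat \<Rightarrow> nat \<Rightarrow> nat \<Rightarrow> nat \<Rightarrow> real \<Rightarrow> real" where
  "bspline p n 0 i x = (if knot p n i \<le> x \<and> x < knot p n (i + 1) then 1 else 0)"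
| "bspline p n (Suc k) i x =
     (x - knot p n i) / (knot p n (i + Suc k) - knot p n i) * bspline p n k i x
   + (knot p n (i + Suc k + 1) - x) / (knot p n (i + Suc k + 1) - knot p n (i + 1))
       * bspline p n k (i + 1) x"

definition greville :: "nat \<Rightarrow> nat \<Rightarrow> nat \<Rightarrow> real" where
  "greville p n i = (\<Sum>k = i + 1..i + p. knot p n k) / real p"

definition rl_right_deriv :: "real \<Rightarrow> (real \<Rightarrow> real) \<Rightarrow> real \<Rightarrow> real" where
  "rl_right_deriv \<alpha> u x =
     (let g = (\<lambda>t. integral {t..1} (\<lambda>y. (y - t) powr (1 - \<alpha>) * u y))
      in deriv (deriv g) x / Gamma (2 - \<alpha>))"

text \<open>The matrix A_n^R, entries for 1 \<le> i, j \<le> n + p - 2.\<close>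
definition A_R :: "real \<Rightarrow> nat \<Rightarrow> nat \<Rightarrow> nat \<Rightarrow> nat \<Rightarrow> real" where
  "A_R \<alpha> p n i j = rl_right_deriv \<alpha> (bspline p n p (j + 1)) (greville p n (i + 1))"

definition mat_norm_1 :: "nat \<Rightarrow> (nat \<Rightarrow> nat \<Rightarrow> real) \<Rightarrow> real" where
  "mat_norm_1 m a = Max ((\<lambda>j. \<Sum>i = 1..m. \<bar>a i j\<bar>) ` {1..m})"

definition mat_norm_inf :: "nat \<Rightarrow> (nat \<Rightarrow> nat \<Rightarrow> real) \<Rightarrow> real" where
  "mat_norm_inf m a = Max ((\<lambda>i. \<Sum>j = 1..m. \<bar>a i j\<bar>) ` {1..m})"

definition mat_norm_2 :: "nat \<Rightarrow> (nat \<Rightarrow> nat \<Rightarrow> real) \<Rightarrow> real" where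
  "mat_norm_2 m a = Sup ((\<lambda>x. sqrt (\<Sum>i = 1..m. (\<Sum>j = 1..m. a i j * x j)\<^sup>2))
                         ` {x. (\<Sum>j = 1..m. (x j)\<^sup>2) = 1})"

end

theory Submission
  imports Defs
begin

lemma knot_alt: "1 \<le> n \<Longrightarrow> knot p n k = real (min n (k - Suc p)) / real n"
  unfolding knot_def by (auto simp: min_def)

lemma knot_mono: "1 \<le> n \<Longrightarrow> k \<le> l \<Longrightarrow> knot p n k \<le> knot p n l"
  by (simp add: knot_alt divide_right_mono)

lemma knot_nonneg: "0 \<le> knot p n k"
  unfolding knot_def by auto

lemma knot_le1: "1 \<le> n \<Longrightarrow> knot p n k \<le> 1"
  by (simp add: knot_alt)

lemma knot_gap:
  assumes "1 \<le> n" "knot p n k \<noteq> knot p n l"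
  shows "1 / real n \<le> \<bar>knot p n k - knot p n l\<bar>"
proof -
  define A where "A = min n (k - Suc p)"
  define B where "B = min n (l - Suc p)"
  have kA: "knot p n k = real A / n" and lB: "knot p n l = real B / n"
    using assms(1) by (simp_all add: knot_alt A_def B_def)
  have "A \<noteq> B" using assms(2) kA lB by auto
  hence "1 \<le> \<bar>real A - real B\<bar>" by linarith
  hence "1 / real n \<le> \<bar>real A - real B\<bar> / n" using assms(1)
    by (simp add: divide_right_mono)
  also have "\<bar>real A - real B\<bar> / n = \<bar>knot p n k - knot p n l\<bar>"
    using assms(1) by (simp add: kA lB diff_divide_distrib[symmetric])
  finally show ?thesis .
qed

lemma knot_lip:
  assumes "1 \<le> n" "k \<le> l"
  shows "knot p n l - knot p n k \<le> real (l - k) / real n"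
proof -
  have "real (min n (l - Suc p)) - real (min n (k - Suc p)) \<le> real (l - k)"
    using assms(2) by (simp add: min_def) linarith
  thus ?thesis using assms(1)
    by (simp add: knot_alt diff_divide_distrib[symmetric] divide_right_mono)
qed

lemma knot_simple:
  assumes "1 \<le> n" "0 < knot p n r" "knot p n r < 1" "knot p n l = knot p n r"
  shows "l = r"
proof -
  have n0: "real n > 0" using assms(1) by simp
  have e: "min n (l - Suc p) = min n (r - Suc p)"
    using assms(4) n0 by (simp add: knot_alt)
  have "0 < min n (r - Suc p)" "min n (r - Suc p) < n"
    using assms(2,3) n0 by (auto simp: knot_alt field_simps)
  thus ?thesis using e by (auto simp: min_def split: if_splits)
qed

lemma knot_lower: "1 \<le> n \<Longrightarrow> k \<le> p + n + 1 \<Longrightarrow> real k - real p - 1 \<le> knot p n k * n"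
  by (simp add: knot_alt min_def) linarith

lemma knot_upper: "1 \<le> n \<Longrightarrow> knot p n k * n \<le> real k - real p - 1 \<or> knot p n k * n = 0"
  by (simp add: knot_alt min_def) linarith

definition tp :: "nat \<Rightarrow> real \<Rightarrow> real \<Rightarrow> real" where
  "tp m c y = (if y < c then (c - y) ^ m else 0)"

definition intr :: "nat \<Rightarrow> nat \<Rightarrow> nat \<Rightarrow> bool" where
  "intr p n r \<longleftrightarrow> 0 < knot p n r \<and> knot p n r < 1"

definition PP :: "nat \<Rightarrow> nat \<Rightarrow> nat \<Rightarrow> nat \<Rightarrow> nat \<Rightarrow> real" where
  "PP p n k i r = (\<Prod>l\<in>{i..i+k+1}-{r}. (knot p n r - knot p n l))"

definition aa :: "nat \<Rightarrow> nat \<Rightarrow> nat \<Rightarrow> nat \<Rightarrow> nat \<Rightarrow> real" where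
  "aa p n k i r = (knot p n (i+k+1) - knot p n i) / PP p n k i r"

fun bb :: "nat \<Rightarrow> nat \<Rightarrow> nat \<Rightarrow> nat \<Rightarrow> nat \<Rightarrow> real" where
  "bb p n 0 i q = (if q = 0 \<and> knot p n (i+1) = 1 \<and> knot p n i \<noteq> 1 then 1 else 0)"
| "bb p n (Suc k) i q =
     (if q = 0 then 0 else - bb p n k i (q-1) / (knot p n (i+k+1) - knot p n i)
                          + bb p n k (i+1) (q-1) / (knot p n (i+k+2) - knot p n (i+1)))
     + (1 - knot p n i) / (knot p n (i+k+1) - knot p n i) * bb p n k i q
     + (knot p n (i+k+2) - 1) / (knot p n (i+k+2) - knot p n (i+1)) * bb p n k (i+1) q"

lemma bb_zero: "k < q \<Longrightarrow> bb p n k i q = 0"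
  by (induction k arbitrary: i q) auto

definition ta :: "nat \<Rightarrow> nat \<Rightarrow> nat \<Rightarrow> nat \<Rightarrow> nat \<Rightarrow> real \<Rightarrow> real" where
  "ta p n k i r y = (if intr p n r \<and> i \<le> r \<and> r \<le> i+k+1 then aa p n k i r * tp k (knot p n r) y else 0)"

definition SA :: "nat \<Rightarrow> nat \<Rightarrow> nat \<Rightarrow> nat \<Rightarrow> real \<Rightarrow> real" where
  "SA p n k i y = (\<Sum>r=i..i+k+1. if intr p n r then aa p n k i r * tp k (knot p n r) y else 0)"

definition SB :: "nat \<Rightarrow> nat \<Rightarrow> nat \<Rightarrow> nat \<Rightarrow> real \<Rightarrow> real" where
  "SB p n k i y = (\<Sum>q\<le>k. bb p n k i q * tp q 1 y)"

lemma SA_ta: "SA p n k i y = (\<Sum>r=i..i+k+2. ta p n k i r y)"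
proof -
  have "SA p n k i y = (\<Sum>r=i..i+k+1. ta p n k i r y)"
    unfolding SA_def ta_def by (rule sum.cong) auto
  also have "\<dots> = (\<Sum>r=i..i+k+2. ta p n k i r y)"
    by (rule sum.mono_neutral_left) (auto simp: ta_def)
  finally show ?thesis .
qed

lemma SA_ta': "SA p n k (Suc i) y = (\<Sum>r=i..i+k+2. ta p n k (Suc i) r y)"
proof -
  have "SA p n k (Suc i) y = (\<Sum>r=Suc i..i+k+2. ta p n k (Suc i) r y)"
    unfolding SA_def ta_def by (rule sum.cong) auto
  also have "\<dots> = (\<Sum>r=i..i+k+2. ta p n k (Suc i) r y)"
    by (rule sum.mono_neutral_left) (auto simp: ta_def)
  finally show ?thesis .
qed

definition Q :: "nat \<Rightarrow> nat \<Rightarrow> nat \<Rightarrow> nat \<Rightarrow> nat \<Rightarrow> real" where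
  "Q p n i j r = (\<Prod>l\<in>{i..j}-{r}. (knot p n r - knot p n l))"

lemma PP_Q: "PP p n k i r = Q p n i (i+k+1) r"
  by (simp add: PP_def Q_def)

lemma Q_top: "r \<noteq> Suc j \<Longrightarrow> i \<le> Suc j \<Longrightarrow> Q p n i (Suc j) r = Q p n i j r * (knot p n r - knot p n (Suc j))"
proof -
  assume a: "r \<noteq> Suc j" "i \<le> Suc j"
  have "{i..Suc j} - {r} = insert (Suc j) ({i..j} - {r})" using a by auto
  thus ?thesis unfolding Q_def by (simp add: mult.commute)
qed

lemma Q_bot: "r \<noteq> i \<Longrightarrow> i \<le> j \<Longrightarrow> Q p n i j r = (knot p n r - knot p n i) * Q p n (Suc i) j r"
proof -
  assume a: "r \<noteq> i" "i \<le> j"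
  have "{i..j} - {r} = insert i ({Suc i..j} - {r})" using a by auto
  thus ?thesis unfolding Q_def by simp
qed

lemma Q_nz:
  assumes "1 \<le> n" "intr p n r" shows "Q p n i j r \<noteq> 0"
proof -
  have "\<forall>l\<in>{i..j}-{r}. knot p n r - knot p n l \<noteq> 0"
    using knot_simple[OF assms(1)] assms(2) unfolding intr_def by force
  thus ?thesis unfolding Q_def by (simp add: prod_zero_iff)
qed

lemma alg3:
  fixes A Bk Ck D c P z y :: real
  assumes "Bk - A \<noteq> 0" "Ck - D \<noteq> 0" "c - A \<noteq> 0" "c - Ck \<noteq> 0" "P \<noteq> 0" "y = c - z"
  shows "(y - A)/(Bk - A) * ((Bk - A)/((c-A)*P) * z^k) + (Ck - y)/(Ck - D) * ((Ck - D)/(P*(c - Ck)) * z^k)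
      = (Ck - A)/((c-A)*(P*(c-Ck))) * z^Suc k"
proof -
  have e1: "(y - A)/(Bk - A) * ((Bk - A)/((c-A)*P) * z^k) = (y-A)/((c-A)*P) * z^k"
    using assms by simp
  have e2: "(Ck - y)/(Ck - D) * ((Ck - D)/(P*(c - Ck)) * z^k) = (Ck-y)/(P*(c - Ck)) * z^k"
    using assms by simp
  define a where "a = c - A"
  define b where "b = c - Ck"
  have A: "A = c - a" and C: "Ck = c - b" by (simp_all add: a_def b_def)
  have "a \<noteq> 0" "b \<noteq> 0" using assms by (simp_all add: a_def b_def)
  have "(y-A)/((c-A)*P) * z^k + (Ck-y)/(P*(c - Ck)) * z^k = (Ck - A)/((c-A)*(P*(c-Ck))) * z^Suc k"
    unfolding A C assms(6) using assms(5) \<open>a\<noteq>0\<close> \<open>b\<noteq>0\<close>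
    by (simp add: field_simps; simp add: algebra_simps)
  thus ?thesis by (simp only: e1 e2)
qed
lemma alg1:
  fixes A Bk Ck c P z y :: real
  assumes "Bk - A \<noteq> 0" "c - Ck \<noteq> 0" "P \<noteq> 0" "y = c - z" "A = c"
  shows "(y - A)/(Bk - A) * ((Bk - A)/P * z^k) = (Ck - A)/(P*(c-Ck)) * z^Suc k"
proof -
  define b where "b = c - Ck"
  have C: "Ck = c - b" by (simp add: b_def)
  have "b \<noteq> 0" using assms by (simp add: b_def)
  show ?thesis using assms(1,3) unfolding C assms(4,5) using \<open>b\<noteq>0\<close>
    by (simp add: field_simps; simp add: algebra_simps)
qed
lemma alg2:
  fixes A Ck D c P z y :: real
  assumes "Ck - D \<noteq> 0" "c - A \<noteq> 0" "P \<noteq> 0" "y = c - z" "Ck = c"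
  shows "(Ck - y)/(Ck - D) * ((Ck - D)/P * z^k) = (Ck - A)/((c-A)*P) * z^Suc k"
proof -
  define a where "a = c - A"
  have A: "A = c - a" by (simp add: a_def)
  have "a \<noteq> 0" using assms by (simp add: a_def)
  show ?thesis using assms(1,3) unfolding A assms(4,5) using \<open>a\<noteq>0\<close>
    by (simp add: field_simps; simp add: algebra_simps)
qed

lemma ta_step:
  assumes n: "1 \<le> n"
  shows "(y - knot p n i) / (knot p n (i+k+1) - knot p n i) * ta p n k i r y
       + (knot p n (i+k+2) - y) / (knot p n (i+k+2) - knot p n (i+1)) * ta p n k (Suc i) r y
       = ta p n (Suc k) i r y"
proof -
  let ?\<xi> = "knot p n"
  consider "\<not> (intr p n r \<and> i \<le> r \<and> r \<le> i+k+2)" | "intr p n r" "i \<le> r" "r \<le> i+k+2" by blast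
  then show ?thesis
  proof cases
    case 1 thus ?thesis by (auto simp: ta_def)
  next
    case 2
    note ir = 2
    have ne: "\<And>l. l \<noteq> r \<Longrightarrow> ?\<xi> l \<noteq> ?\<xi> r"
      using knot_simple[OF n] ir(1) unfolding intr_def by blast
    show ?thesis
    proof (cases "y < ?\<xi> r")
      case False thus ?thesis by (simp add: ta_def tp_def)
    next
      case True
      define z where "z = ?\<xi> r - y"
      have yz: "y = ?\<xi> r - z" using z_def by simp
      have tpk: "\<And>m. tp m (?\<xi> r) y = z ^ m" using True by (simp add: tp_def z_def)
      consider "r = i" | "r = i+k+2" | "i < r" "r < i+k+2" using ir by linarith
      then show ?thesis
      proof cases
        case 1
        have q1: "Q p n i (Suc (i+k+1)) r = Q p n i (i+k+1) r * (?\<xi> r - ?\<xi> (Suc (i+k+1)))"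
          by (rule Q_top) (use 1 in auto)
        have nz: "Q p n i (i+k+1) r \<noteq> 0" by (rule Q_nz[OF n ir(1)])
        have d1: "?\<xi> (i+k+1) - ?\<xi> i \<noteq> 0" using ne[of "i+k+1"] 1 by auto
        have d3: "?\<xi> r - ?\<xi> (i+k+2) \<noteq> 0" using ne[of "i+k+2"] 1 by auto
        have r1: "r \<le> i+k+1" using 1 by simp
        have ta1: "ta p n k i r y = (?\<xi> (i+k+1) - ?\<xi> i) / Q p n i (i+k+1) r * z^k"
          using ir r1 by (simp add: ta_def tpk aa_def PP_Q)
        have ta2: "ta p n k (Suc i) r y = 0" using 1 by (simp add: ta_def)
        have ta3: "ta p n (Suc k) i r y = (?\<xi> (i+k+2) - ?\<xi> i) / (Q p n i (i+k+1) r * (?\<xi> r - ?\<xi> (i+k+2))) * z^Suc k"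
          using ir q1 by (simp add: ta_def tpk aa_def PP_Q)
        show ?thesis unfolding ta1 ta2 ta3 using nz d1 d3 1
          by (simp only: mult_zero_right add_0_right) (rule alg1, auto simp: yz)
      next
        case 2
        have q1: "Q p n i (i+k+2) r = (?\<xi> r - ?\<xi> i) * Q p n (Suc i) (i+k+2) r"
          by (rule Q_bot) (use 2 in auto)
        have nz: "Q p n (Suc i) (i+k+2) r \<noteq> 0" by (rule Q_nz[OF n ir(1)])
        have d2: "?\<xi> (i+k+2) - ?\<xi> (i+1) \<noteq> 0" using ne[of "i+1"] 2 by auto
        have d3: "?\<xi> r - ?\<xi> i \<noteq> 0" using ne[of "i"] 2 by auto
        have e: "Suc (i + k) + 1 = i + k + 2" by simp
        have r2: "Suc i \<le> r" using 2 by simp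
        have ta1: "ta p n k i r y = 0" using 2 by (simp add: ta_def)
        have ta2: "ta p n k (Suc i) r y = (?\<xi> (i+k+2) - ?\<xi> (i+1)) / Q p n (Suc i) (i+k+2) r * z^k"
          using ir r2 by (simp add: ta_def tpk aa_def PP_Q e)
        have ta3: "ta p n (Suc k) i r y = (?\<xi> (i+k+2) - ?\<xi> i) / ((?\<xi> r - ?\<xi> i) * Q p n (Suc i) (i+k+2) r) * z^Suc k"
          using ir q1 by (simp add: ta_def tpk aa_def PP_Q e)
        show ?thesis unfolding ta1 ta2 ta3 using nz d2 d3 2
          by (simp only: mult_zero_right add_0_left) (rule alg2, auto simp: yz)
      next
        case 3
        define P0 where "P0 = Q p n (Suc i) (i+k+1) r"
        have P1: "Q p n i (i+k+1) r = (?\<xi> r - ?\<xi> i) * P0"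
          unfolding P0_def by (rule Q_bot) (use 3 in auto)
        have P2: "Q p n (Suc i) (i+k+2) r = P0 * (?\<xi> r - ?\<xi> (i+k+2))"
          unfolding P0_def using Q_top[of r "i+k+1" "Suc i" p n] 3 by auto
        have P3: "Q p n i (i+k+2) r = (?\<xi> r - ?\<xi> i) * (P0 * (?\<xi> r - ?\<xi> (i+k+2)))"
          using Q_bot[of r i "i+k+2" p n] P2 3 by auto
        have nz: "P0 \<noteq> 0" unfolding P0_def by (rule Q_nz[OF n ir(1)])
        have d1: "?\<xi> (i+k+1) - ?\<xi> i \<noteq> 0"
          using ne[of "i+k+1"] ne[of i] 3 knot_mono[OF n, of i r p] knot_mono[OF n, of r "i+k+1" p] by fastforce
        have d2: "?\<xi> (i+k+2) - ?\<xi> (i+1) \<noteq> 0"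
          using ne[of "i+k+2"] ne[of "i+1"] 3 knot_mono[OF n, of "i+1" r p] knot_mono[OF n, of r "i+k+2" p] by fastforce
        have d3: "?\<xi> r - ?\<xi> i \<noteq> 0" using ne[of "i"] 3 by auto
        have d4: "?\<xi> r - ?\<xi> (i+k+2) \<noteq> 0" using ne[of "i+k+2"] 3 by auto
        have e: "Suc (i + k) + 1 = i + k + 2" "Suc i + k + 1 = i + k + 2" by simp_all
        have ta1: "ta p n k i r y = (?\<xi> (i+k+1) - ?\<xi> i) / ((?\<xi> r - ?\<xi> i) * P0) * z^k"
          using 3 ir by (simp add: ta_def tpk aa_def PP_Q P1[simplified])
        have ta2: "ta p n k (Suc i) r y = (?\<xi> (i+k+2) - ?\<xi> (i+1)) / (P0 * (?\<xi> r - ?\<xi> (i+k+2))) * z^k"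
          using 3 ir by (simp add: ta_def tpk aa_def PP_Q P2[simplified] e)
        have ta3: "ta p n (Suc k) i r y = (?\<xi> (i+k+2) - ?\<xi> i) / ((?\<xi> r - ?\<xi> i) * (P0 * (?\<xi> r - ?\<xi> (i+k+2)))) * z^Suc k"
          using 3 ir by (simp add: ta_def tpk aa_def PP_Q P3[simplified] e)
        show ?thesis unfolding ta1 ta2 ta3
          by (rule alg3[OF d1 d2 d3 d4 nz]) (simp add: yz)
      qed
    qed
  qed
qed

lemma SA_ta0: "SA p n k i y = (\<Sum>r=i..i+k+1. ta p n k i r y)"
  unfolding SA_def ta_def by (rule sum.cong) auto

lemma SB_step:
  "(y - knot p n i) / (knot p n (i+k+1) - knot p n i) * SB p n k i y
 + (knot p n (i+k+2) - y) / (knot p n (i+k+2) - knot p n (i+1)) * SB p n k (Suc i) y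
 = SB p n (Suc k) i y"
proof (cases "y < 1")
  case False thus ?thesis by (simp add: SB_def tp_def)
next
  case True
  define z where "z = 1 - y"
  have tpz: "\<And>q. tp q 1 y = z ^ q" using True by (simp add: tp_def z_def)
  define A where "A = knot p n i"
  define C where "C = knot p n (i+k+2)"
  define d1 where "d1 = knot p n (i+k+1) - knot p n i"
  define d2 where "d2 = knot p n (i+k+2) - knot p n (i+1)"
  define S1 where "S1 = (\<Sum>q\<le>k. bb p n k i q * z^q)"
  define S2 where "S2 = (\<Sum>q\<le>k. bb p n k (Suc i) q * z^q)"
  have ext: "\<And>j. (\<Sum>q\<le>Suc k. bb p n k j q * z^q) = (\<Sum>q\<le>k. bb p n k j q * z^q)"
    by (simp add: bb_zero)
  have sh: "(\<Sum>q\<le>Suc k. (if q = 0 then 0 else - bb p n k i (q-1) / d1 + bb p n k (Suc i) (q-1) / d2) * z^q)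
      = (\<Sum>q\<le>k. (- bb p n k i q / d1 + bb p n k (Suc i) q / d2) * z^Suc q)"
    by (simp add: sum.atMost_Suc_shift del: sum.atMost_Suc)
  have "SB p n (Suc k) i y = (\<Sum>q\<le>Suc k. ((if q = 0 then 0 else - bb p n k i (q-1) / d1 + bb p n k (Suc i) (q-1) / d2)
       + (1 - A) / d1 * bb p n k i q + (C - 1) / d2 * bb p n k (Suc i) q) * z^q)"
    unfolding SB_def tpz A_def C_def d1_def d2_def
    by (rule sum.cong) (simp_all add: add.commute add.left_commute)
  also have "\<dots> = (\<Sum>q\<le>k. (- bb p n k i q / d1 + bb p n k (Suc i) q / d2) * z^Suc q)
       + (1 - A) / d1 * S1 + (C - 1) / d2 * S2"
    by (simp only: distrib_right sum.distrib sh sum_distrib_left[symmetric] mult.assoc ext S1_def S2_def)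
  also have "(\<Sum>q\<le>k. (- bb p n k i q / d1 + bb p n k (Suc i) q / d2) * z^Suc q) = - z * S1 / d1 + z * S2 / d2"
    by (simp add: S1_def S2_def sum_distrib_left sum_divide_distrib sum.distrib[symmetric] algebra_simps)
  finally have R: "SB p n (Suc k) i y = - z * S1 / d1 + z * S2 / d2 + (1 - A) / d1 * S1 + (C - 1) / d2 * S2" .
  have L: "SB p n k i y = S1" "SB p n k (Suc i) y = S2" by (simp_all add: SB_def tpz S1_def S2_def)
  have y: "y = 1 - z" using z_def by simp
  have w1: "(y - knot p n i) / (knot p n (i+k+1) - knot p n i) = (1 - A)/d1 - z/d1"
    unfolding A_def d1_def y by (simp add: diff_divide_distrib[symmetric])
  have w2: "(knot p n (i+k+2) - y) / (knot p n (i+k+2) - knot p n (i+1)) = (C - 1)/d2 + z/d2"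
    unfolding C_def d2_def y by (simp add: add_divide_distrib[symmetric])
  show ?thesis unfolding R L w1 w2
    by (simp add: algebra_simps)
qed

lemma bspline_rep:
  assumes n: "1 \<le> n" and y: "0 < y"
  shows "bspline p n k i y = SA p n k i y + SB p n k i y"
proof (induction k arbitrary: i)
  case 0
  define A where "A = knot p n i"
  define B where "B = knot p n (Suc i)"
  have AB: "0 \<le> A" "A \<le> B" "B \<le> 1"
    using knot_nonneg knot_mono[OF n] knot_le1[OF n] unfolding A_def B_def by auto
  have s1: "{i..Suc i} - {i} = {Suc i}" and s2: "{i..Suc i} - {Suc i} = {i}" by auto
  have ne1: "intr p n i \<Longrightarrow> A \<noteq> B" using knot_simple[OF n, of p i "i+1"]
    unfolding intr_def A_def B_def by auto
  have ne2: "intr p n (i+1) \<Longrightarrow> A \<noteq> B" using knot_simple[OF n, of p "i+1" "i"]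
    unfolding intr_def A_def B_def by auto
  have aa1: "intr p n i \<Longrightarrow> aa p n 0 i i = -1"
    using ne1 by (simp add: aa_def PP_def s1 A_def B_def divide_eq_minus_1_iff)
  have aa2: "intr p n (i+1) \<Longrightarrow> aa p n 0 i (i+1) = 1"
    using ne2 by (simp add: aa_def PP_def s2 A_def B_def)
  have SA0: "SA p n 0 i y = (if intr p n i then - tp 0 A y else 0) + (if intr p n (i+1) then tp 0 B y else 0)"
    using aa1 aa2 by (simp add: SA_def A_def B_def)
  have SB0: "SB p n 0 i y = (if B = 1 \<and> A \<noteq> 1 then tp 0 1 y else 0)"
    by (simp add: SB_def A_def B_def)
  have bs: "bspline p n 0 i y = (if A \<le> y \<and> y < B then 1 else 0)"
    by (simp add: A_def B_def)
  show ?case unfolding bs SA0 SB0 using AB y ne1 ne2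
    by (auto simp: tp_def intr_def A_def[symmetric] B_def[symmetric])
next
  case (Suc k)
  have e: "i + Suc k = i + k + 1" "i + Suc k + 1 = i + k + 2" by simp_all
  have "bspline p n (Suc k) i y =
      (y - knot p n i) / (knot p n (i+k+1) - knot p n i) * (SA p n k i y + SB p n k i y)
    + (knot p n (i+k+2) - y) / (knot p n (i+k+2) - knot p n (i+1)) * (SA p n k (Suc i) y + SB p n k (Suc i) y)"
  proof -
    have "bspline p n (Suc k) i y =
      (y - knot p n i) / (knot p n (i+k+1) - knot p n i) * bspline p n k i y
    + (knot p n (i+k+2) - y) / (knot p n (i+k+2) - knot p n (i+1)) * bspline p n k (Suc i) y"
      by simp
    thus ?thesis using Suc.IH[of i] Suc.IH[of "Suc i"] by simp
  qed
  also have "\<dots> = ((y - knot p n i) / (knot p n (i+k+1) - knot p n i) * SA p n k i y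
      + (knot p n (i+k+2) - y) / (knot p n (i+k+2) - knot p n (i+1)) * SA p n k (Suc i) y)
      + ((y - knot p n i) / (knot p n (i+k+1) - knot p n i) * SB p n k i y
      + (knot p n (i+k+2) - y) / (knot p n (i+k+2) - knot p n (i+1)) * SB p n k (Suc i) y)"
    by (simp only: distrib_left add_ac)
  also have "(y - knot p n i) / (knot p n (i+k+1) - knot p n i) * SA p n k i y
      + (knot p n (i+k+2) - y) / (knot p n (i+k+2) - knot p n (i+1)) * SA p n k (Suc i) y
      = SA p n (Suc k) i y"
  proof -
    have "(y - knot p n i) / (knot p n (i+k+1) - knot p n i) * SA p n k i y
      + (knot p n (i+k+2) - y) / (knot p n (i+k+2) - knot p n (i+1)) * SA p n k (Suc i) y
      = (\<Sum>r=i..i+k+2. (y - knot p n i) / (knot p n (i+k+1) - knot p n i) * ta p n k i r y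
      + (knot p n (i+k+2) - y) / (knot p n (i+k+2) - knot p n (i+1)) * ta p n k (Suc i) r y)"
      by (simp only: SA_ta[of p n k i y] SA_ta'[of p n k i y] sum_distrib_left sum.distrib)
    also have "\<dots> = (\<Sum>r=i..i+k+2. ta p n (Suc k) i r y)"
      by (rule sum.cong[OF refl]) (rule ta_step[OF n])
    also have "\<dots> = SA p n (Suc k) i y" by (simp add: SA_ta0)
    finally show ?thesis .
  qed
  also have "(y - knot p n i) / (knot p n (i+k+1) - knot p n i) * SB p n k i y
      + (knot p n (i+k+2) - y) / (knot p n (i+k+2) - knot p n (i+1)) * SB p n k (Suc i) y
      = SB p n (Suc k) i y" by (rule SB_step)
  finally show ?case .
qed

lemma bspline_supp:
  assumes n: "1 \<le> n"
  shows "y < knot p n i \<or> knot p n (i+k+1) \<le> y \<Longrightarrow> bspline p n k i y = 0"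
proof (induction k arbitrary: i)
  case 0 thus ?case by auto
next
  case (Suc k)
  have m1: "knot p n i \<le> knot p n (Suc i)" "knot p n (i+k+1) \<le> knot p n (i+k+2)"
    using knot_mono[OF n] by auto
  have "bspline p n k i y = 0" using Suc.prems m1 by (intro Suc.IH) auto
  moreover have "bspline p n k (Suc i) y = 0" using Suc.prems m1 by (intro Suc.IH) auto
  ultimately show ?case by simp
qed

lemma abs_sum2: "(X::real) = a + b \<Longrightarrow> \<bar>a\<bar> \<le> c \<Longrightarrow> \<bar>b\<bar> \<le> d \<Longrightarrow> \<bar>X\<bar> \<le> c + d"
  by arith

lemma bspline_bound:
  assumes n: "1 \<le> n"
  shows "\<bar>bspline p n k i y\<bar> \<le> 2^k"
proof (induction k arbitrary: i)
  case 0 thus ?case by auto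
next
  case (Suc k)
  have A: "\<bar>(y - knot p n i) / (knot p n (i+k+1) - knot p n i) * bspline p n k i y\<bar> \<le> 2^k"
  proof (cases "bspline p n k i y = 0")
    case False
    hence r: "knot p n i \<le> y" "y < knot p n (i+k+1)" using bspline_supp[OF n, of y p i k] by linarith+
    have "0 \<le> (y - knot p n i) / (knot p n (i+k+1) - knot p n i)"
         "(y - knot p n i) / (knot p n (i+k+1) - knot p n i) \<le> 1"
      using r by (auto simp: divide_simps)
    hence "\<bar>(y - knot p n i) / (knot p n (i+k+1) - knot p n i)\<bar> \<le> 1" by (intro abs_leI) linarith+
    hence "\<bar>(y - knot p n i) / (knot p n (i+k+1) - knot p n i)\<bar> * \<bar>bspline p n k i y\<bar> \<le> 1 * 2^k"
      using Suc.IH[of i] by (intro mult_mono) auto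
    thus ?thesis by (simp add: abs_mult)
  qed simp
  have B: "\<bar>(knot p n (i+k+2) - y) / (knot p n (i+k+2) - knot p n (Suc i)) * bspline p n k (Suc i) y\<bar> \<le> 2^k"
  proof (cases "bspline p n k (Suc i) y = 0")
    case False
    hence r: "knot p n (Suc i) \<le> y" "y < knot p n (i+k+2)" using bspline_supp[OF n, of y p "Suc i" k] by force+
    have "0 \<le> (knot p n (i+k+2) - y) / (knot p n (i+k+2) - knot p n (Suc i))"
         "(knot p n (i+k+2) - y) / (knot p n (i+k+2) - knot p n (Suc i)) \<le> 1"
      using r by (auto simp: divide_simps)
    hence "\<bar>(knot p n (i+k+2) - y) / (knot p n (i+k+2) - knot p n (Suc i))\<bar> \<le> 1" by (intro abs_leI) linarith+
    hence "\<bar>(knot p n (i+k+2) - y) / (knot p n (i+k+2) - knot p n (Suc i))\<bar> * \<bar>bspline p n k (Suc i) y\<bar> \<le> 1 * 2^k"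
      using Suc.IH[of "Suc i"] by (intro mult_mono) auto
    thus ?thesis by (simp add: abs_mult)
  qed simp
  have "bspline p n (Suc k) i y = (y - knot p n i) / (knot p n (i+k+1) - knot p n i) * bspline p n k i y
     + (knot p n (i+k+2) - y) / (knot p n (i+k+2) - knot p n (Suc i)) * bspline p n k (Suc i) y" by simp
  hence "\<bar>bspline p n (Suc k) i y\<bar> \<le> 2^k + 2^k" by (rule abs_sum2[OF _ A B])
  thus ?case by simp
qed

lemma div_knot:
  assumes n: "1 \<le> n"
  shows "\<bar>x / (knot p n a - knot p n b)\<bar> \<le> \<bar>x\<bar> * n"
proof (cases "knot p n a = knot p n b")
  case False
  hence g: "1 / real n \<le> \<bar>knot p n a - knot p n b\<bar>" by (rule knot_gap[OF n])
  have np: "real n > 0" using n by simp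
  have dpos: "0 < \<bar>knot p n a - knot p n b\<bar>" using g np
    by (smt (verit) divide_pos_pos)
  have "\<bar>x / (knot p n a - knot p n b)\<bar> = \<bar>x\<bar> / \<bar>knot p n a - knot p n b\<bar>" by (simp add: abs_divide)
  also have "\<dots> \<le> \<bar>x\<bar> / (1 / real n)"
    using g np dpos by (intro divide_left_mono) auto
  finally show ?thesis using np by simp
qed simp

lemma aa_bound:
  assumes n: "1 \<le> n" and r: "intr p n r" "i \<le> r" "r \<le> i+k+1"
  shows "\<bar>aa p n k i r\<bar> \<le> real (k+1) * real n ^ k"
proof -
  have np: "real n > 0" using n by simp
  have d1: "0 \<le> knot p n (i+k+1) - knot p n i" "knot p n (i+k+1) - knot p n i \<le> real (k+1) / n"
    using knot_mono[OF n, of i "i+k+1" p] knot_lip[OF n, of i "i+k+1" p] by auto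
  have card: "card ({i..i+k+1} - {r}) = k+1" using r by simp
  have "(\<Prod>l\<in>{i..i+k+1}-{r}. 1 / real n) \<le> (\<Prod>l\<in>{i..i+k+1}-{r}. \<bar>knot p n r - knot p n l\<bar>)"
  proof (rule prod_mono, safe)
    fix l assume l: "l \<in> {i..i+k+1}" "l \<noteq> r"
    have "knot p n r \<noteq> knot p n l" using knot_simple[OF n, of p r l] r(1) l(2) unfolding intr_def by auto
    thus "1 / real n \<le> \<bar>knot p n r - knot p n l\<bar>" by (rule knot_gap[OF n])
  qed (use np in auto)
  hence P: "(1 / real n) ^ (k+1) \<le> \<bar>PP p n k i r\<bar>"
    using card by (simp add: PP_def abs_prod)
  have Ppos: "0 < (1 / real n) ^ (k+1)" using np by simp
  have "\<bar>aa p n k i r\<bar> = (knot p n (i+k+1) - knot p n i) / \<bar>PP p n k i r\<bar>"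
    using d1 by (simp add: aa_def abs_divide)
  also have "\<dots> \<le> (real (k+1) / n) / ((1 / real n) ^ (k+1))"
    using d1 P Ppos by (intro frac_le) auto
  also have "\<dots> = real (k+1) * real n ^ k" using np by (simp add: field_simps power_Suc)
  finally show ?thesis .
qed

lemma bb_supp:
  assumes n: "1 \<le> n"
  shows "bb p n k i q \<noteq> 0 \<Longrightarrow> knot p n (i+k+1) = 1 \<and> knot p n i < 1"
proof (induction k arbitrary: i q)
  case 0 thus ?case using knot_le1[OF n, of p i] by (auto split: if_splits)
next
  case (Suc k)
  have m: "knot p n (i+k+1) \<le> knot p n (i+k+2)" "knot p n (i+k+2) \<le> 1" "knot p n i \<le> knot p n (Suc i)"
    using knot_mono[OF n] knot_le1[OF n] by auto
  have "bb p n k i (q-1) \<noteq> 0 \<or> bb p n k (Suc i) (q-1) \<noteq> 0 \<or> bb p n k i q \<noteq> 0 \<or> bb p n k (Suc i) q \<noteq> 0"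
    using Suc.prems by (auto split: if_splits)
  thus ?case
  proof (elim disjE)
    assume "bb p n k i (q-1) \<noteq> 0" thus ?thesis using Suc.IH m by fastforce
  next
    assume "bb p n k (Suc i) (q-1) \<noteq> 0" thus ?thesis using Suc.IH m by fastforce
  next
    assume "bb p n k i q \<noteq> 0" thus ?thesis using Suc.IH m by fastforce
  next
    assume "bb p n k (Suc i) q \<noteq> 0" thus ?thesis using Suc.IH m by fastforce
  qed
qed

lemma bb_bound:
  assumes n: "1 \<le> n"
  shows "\<bar>bb p n k i q\<bar> \<le> 3^k * real n ^ q"
proof (induction k arbitrary: i q)
  case 0 thus ?case by auto
next
  case (Suc k)
  have np: "real n > 0" using n by simp
  define T0 where "T0 = (if q = 0 then 0 else - bb p n k i (q-1) / (knot p n (i+k+1) - knot p n i)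
                          + bb p n k (i+1) (q-1) / (knot p n (i+k+2) - knot p n (i+1)))"
  define T1 where "T1 = (1 - knot p n i) / (knot p n (i+k+1) - knot p n i) * bb p n k i q"
  define T2 where "T2 = (knot p n (i+k+2) - 1) / (knot p n (i+k+2) - knot p n (i+1)) * bb p n k (i+1) q"
  have eq: "bb p n (Suc k) i q = T0 + T1 + T2" by (simp add: T0_def T1_def T2_def)
  have "\<bar>T0\<bar> \<le> 2 * 3^k * real n ^ q"
  proof (cases q)
    case (Suc q')
    have a: "\<bar>bb p n k i q' / (knot p n (i+k+1) - knot p n i)\<bar> \<le> 3^k * real n ^ q"
      using div_knot[OF n, of "bb p n k i q'" p "i+k+1" i] Suc.IH[of i q'] np Suc
      by (smt (verit, ccfv_SIG) mult.assoc mult.commute mult_right_mono of_nat_0_le_iff power_Suc)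
    have b: "\<bar>bb p n k (i+1) q' / (knot p n (i+k+2) - knot p n (i+1))\<bar> \<le> 3^k * real n ^ q"
      using div_knot[OF n, of "bb p n k (i+1) q'" p "i+k+2" "i+1"] Suc.IH[of "i+1" q'] np Suc
      by (smt (verit, ccfv_SIG) mult.assoc mult.commute mult_right_mono of_nat_0_le_iff power_Suc)
    have t: "\<bar>- bb p n k i q' / (knot p n (i+k+1) - knot p n i) + bb p n k (i+1) q' / (knot p n (i+k+2) - knot p n (i+1))\<bar>
      \<le> \<bar>bb p n k i q' / (knot p n (i+k+1) - knot p n i)\<bar> + \<bar>bb p n k (i+1) q' / (knot p n (i+k+2) - knot p n (i+1))\<bar>"
      by (smt (verit) abs_minus_cancel abs_triangle_ineq minus_divide_left)
    show ?thesis using a b t Suc unfolding T0_def by simp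
  qed (simp add: T0_def)
  moreover have "\<bar>T1\<bar> \<le> 3^k * real n ^ q"
  proof (cases "bb p n k i q = 0")
    case False
    hence "knot p n (i+k+1) = 1" "knot p n i < 1" using bb_supp[OF n] by auto
    thus ?thesis using Suc.IH[of i q] unfolding T1_def by simp
  qed (simp add: T1_def)
  moreover have "T2 = 0"
  proof (cases "bb p n k (i+1) q = 0")
    case False
    hence "knot p n (i+k+2) = 1" using bb_supp[OF n, of p k "i+1" q] by auto
    thus ?thesis unfolding T2_def by simp
  qed (simp add: T2_def)
  ultimately show ?case unfolding eq by simp
qed

definition pp :: "real \<Rightarrow> real \<Rightarrow> real" where
  "pp \<beta> z = (if 0 < z then z powr \<beta> else 0)"

lemma beta_int:
  fixes \<alpha> t c :: real
  assumes "\<alpha> < 2" "t < c"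
  shows "((\<lambda>y. (y - t) powr (1 - \<alpha>) * (c - y) ^ m) has_integral
           (Beta (2 - \<alpha>) (real m + 1) * (c - t) powr (real m + 2 - \<alpha>))) {t..c}"
proof -
  define L where "L = c - t"
  have L: "0 < L" using assms by (simp add: L_def)
  have B0: "((\<lambda>s. s powr (1 - \<alpha>) * (1 - s) powr (real m)) has_integral Beta (2 - \<alpha>) (real m + 1)) {0..1}"
    using has_integral_Beta_real[of "2 - \<alpha>" "real m + 1"] assms by simp
  have B1: "((\<lambda>s. s powr (1 - \<alpha>) * (1 - s) ^ m) has_integral Beta (2 - \<alpha>) (real m + 1)) {0..1}"
    by (rule has_integral_spike[OF negligible_sing[of 1] _ B0]) (auto simp: powr_realpow)
  have B2: "((\<lambda>s. L powr (real m + 1 - \<alpha>) * (s powr (1 - \<alpha>) * (1 - s) ^ m)) has_integral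
           L powr (real m + 1 - \<alpha>) * Beta (2 - \<alpha>) (real m + 1)) {0..1}"
    by (rule has_integral_mult_right[OF B1])
  have B3: "((\<lambda>s. (\<lambda>y. (y - t) powr (1 - \<alpha>) * (c - y) ^ m) (L *\<^sub>R s + t)) has_integral
           L powr (real m + 1 - \<alpha>) * Beta (2 - \<alpha>) (real m + 1)) {0..1}"
  proof (rule has_integral_eq[OF _ B2])
    fix s :: real assume s: "s \<in> {0..1}"
    have "(L *\<^sub>R s + t - t) powr (1 - \<alpha>) = L powr (1 - \<alpha>) * s powr (1 - \<alpha>)"
      using s L by (simp add: powr_mult)
    moreover have "(c - (L *\<^sub>R s + t)) ^ m = L ^ m * (1 - s) ^ m"
      by (simp add: L_def power_mult_distrib[symmetric] algebra_simps)
    moreover have "L powr (real m + 1 - \<alpha>) = L powr (1 - \<alpha>) * L ^ m"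
      using L by (simp add: powr_add[symmetric] powr_realpow[symmetric] algebra_simps)
    ultimately show "L powr (real m + 1 - \<alpha>) * (s powr (1 - \<alpha>) * (1 - s) ^ m) =
        (L *\<^sub>R s + t - t) powr (1 - \<alpha>) * (c - (L *\<^sub>R s + t)) ^ m" by simp
  qed
  have e: "L powr (real m + 1 - \<alpha>) * Beta (2 - \<alpha>) (real m + 1) =
     (Beta (2 - \<alpha>) (real m + 1) * (c - t) powr (real m + 2 - \<alpha>)) /\<^sub>R L ^ DIM(real)"
  proof -
    have "L powr (real m + 2 - \<alpha>) = L powr ((real m + 1 - \<alpha>) + 1)" by (simp add: algebra_simps)
    also have "\<dots> = L powr (real m + 1 - \<alpha>) * L powr 1" by (rule powr_add)
    also have "\<dots> = L powr (real m + 1 - \<alpha>) * L" using L by (simp only: powr_one_gt_zero_iff powr_one)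
    finally have p: "L powr (real m + 2 - \<alpha>) = L powr (real m + 1 - \<alpha>) * L" .
    show ?thesis using L by (simp add: L_def[symmetric] p)
  qed
  have box: "cbox ((t - t) /\<^sub>R L) ((c - t) /\<^sub>R L) = {0..1}" using L by (simp add: L_def)
  show ?thesis
    using has_integral_affinity_iff[OF L, where f="\<lambda>y. (y - t) powr (1 - \<alpha>) * (c - y) ^ m" and c=t and a=t and b=c
       and I="Beta (2 - \<alpha>) (real m + 1) * (c - t) powr (real m + 2 - \<alpha>)"] B3
    unfolding box e by simp
qed

lemma GL:
  fixes f :: "real \<Rightarrow> real"
  assumes "s \<le> c" "c \<le> 1" "((\<lambda>y. f y * (c - y) ^ m) has_integral I) {s..c}"
  shows "((\<lambda>y. f y * tp m c y) has_integral I) {s..1}"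
proof -
  have 1: "((\<lambda>y. f y * tp m c y) has_integral I) {s..c}"
    by (rule has_integral_spike[OF negligible_sing[of c] _ assms(3)]) (auto simp: tp_def)
  have 2: "((\<lambda>y. f y * tp m c y) has_integral 0) {c..1}"
    by (rule has_integral_is_0) (auto simp: tp_def)
  show ?thesis using has_integral_combine[OF assms(1,2) 1 2] by simp
qed

lemma GL0:
  fixes f :: "real \<Rightarrow> real"
  assumes "c \<le> s"
  shows "((\<lambda>y. f y * tp m c y) has_integral 0) {s..1}"
  by (rule has_integral_is_0) (use assms in \<open>auto simp: tp_def\<close>)

definition Bt :: "real \<Rightarrow> nat \<Rightarrow> real" where
  "Bt \<alpha> m = Beta (2 - \<alpha>) (real m + 1)"

lemma KT:
  assumes "\<alpha> < 2" "c \<le> 1" "t \<le> 1"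
  shows "((\<lambda>y. (y - t) powr (1 - \<alpha>) * tp m c y) has_integral (Bt \<alpha> m * pp (real m + 2 - \<alpha>) (c - t))) {t..1}"
proof (cases "t < c")
  case True
  show ?thesis using GL[OF _ assms(2) beta_int[OF assms(1) True, of m]] True
    by (simp add: Bt_def pp_def)
next
  case False
  thus ?thesis using GL0[of c t "\<lambda>y. (y - t) powr (1 - \<alpha>)" m] by (simp add: pp_def)
qed

lemma pp_deriv:
  assumes "1 < \<beta> \<or> t < c"
  shows "((\<lambda>t. pp \<beta> (c - t)) has_real_derivative (- \<beta> * pp (\<beta> - 1) (c - t))) (at t)"
proof -
  consider "t < c" | "c < t" | "t = c" "1 < \<beta>" using assms by linarith
  then show ?thesis
  proof cases
    case 1
    have d: "((\<lambda>t. (c - t) powr \<beta>) has_real_derivative (- \<beta> * (c - t) powr (\<beta> - 1))) (at t)"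
      using 1 by (auto intro!: derivative_eq_intros)
    show ?thesis
      by (rule has_field_derivative_transform_within_open[OF _ open_lessThan[of c]])
         (use d 1 in \<open>auto simp: pp_def\<close>)
  next
    case 2
    have d: "((\<lambda>t. 0) has_real_derivative 0) (at t)" by simp
    show ?thesis
      by (rule has_field_derivative_transform_within_open[OF _ open_greaterThan[of c]])
         (use d 2 in \<open>auto simp: pp_def\<close>)
  next
    case 3
    have lim: "((\<lambda>h. pp \<beta> (- h) / h) \<longlongrightarrow> 0) (at 0)"
    proof (rule Lim_null_comparison)
      show "\<forall>\<^sub>F h in at 0. norm (pp \<beta> (- h) / h) \<le> \<bar>h\<bar> powr (\<beta> - 1)"
      proof (rule always_eventually, rule allI)
        fix h :: real
        show "norm (pp \<beta> (- h) / h) \<le> \<bar>h\<bar> powr (\<beta> - 1)"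
        proof (cases "0 < - h")
          case True
          hence "\<bar>h\<bar> = - h" by simp
          hence "norm (pp \<beta> (- h) / h) = \<bar>h\<bar> powr \<beta> / \<bar>h\<bar>" using True by (simp add: pp_def)
          also have "\<dots> = \<bar>h\<bar> powr (\<beta> - 1)" using True by (simp add: powr_diff)
          finally show ?thesis by simp
        qed (simp add: pp_def)
      qed
      show "((\<lambda>h. \<bar>h\<bar> powr (\<beta> - 1)) \<longlongrightarrow> 0) (at 0)"
        by (rule tendsto_zero_powrI) (use 3 in \<open>auto intro!: tendsto_eq_intros\<close>)
    qed
    show ?thesis unfolding DERIV_def using lim 3 by (simp add: pp_def)
  qed
qed

definition Rep :: "(nat \<Rightarrow> real \<Rightarrow> real) \<Rightarrow> nat \<Rightarrow> nat \<Rightarrow> nat \<Rightarrow> nat \<Rightarrow> real" where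
  "Rep F p n k i = (\<Sum>r=i..i+k+1. if intr p n r then aa p n k i r * F k (knot p n r) else 0)
                 + (\<Sum>q\<le>k. bb p n k i q * F q 1)"

definition RC :: "nat \<Rightarrow> nat \<Rightarrow> nat \<Rightarrow> nat \<Rightarrow> nat \<Rightarrow> real \<Rightarrow> bool" where
  "RC p n k i m c \<longleftrightarrow> knot p n i \<le> c \<and> c \<le> 1 \<and> (c = 1 \<or> (m = k \<and> 0 < c \<and> c < 1))"

lemma Rep_tp: "SA p n k i y + SB p n k i y = Rep (\<lambda>m c. tp m c y) p n k i"
  by (simp add: Rep_def SA_def SB_def)

lemma RC_r: "1 \<le> n \<Longrightarrow> r \<in> {i..i+k+1} \<Longrightarrow> intr p n r \<Longrightarrow> RC p n k i k (knot p n r)"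
  unfolding RC_def intr_def using knot_mono[of n i r p] by auto

lemma RC_1: "1 \<le> n \<Longrightarrow> RC p n k i q 1"
  unfolding RC_def using knot_le1[of n p i] by auto

lemma Rep_integral:
  fixes K :: "real \<Rightarrow> real"
  assumes n: "1 \<le> n"
    and h: "\<And>m c. RC p n k i m c \<Longrightarrow> ((\<lambda>y. K y * tp m c y) has_integral F m c) S"
  shows "((\<lambda>y. K y * Rep (\<lambda>m c. tp m c y) p n k i) has_integral Rep F p n k i) S"
proof -
  have eq: "(\<lambda>y. K y * Rep (\<lambda>m c. tp m c y) p n k i) = (\<lambda>y.
      (\<Sum>r=i..i+k+1. if intr p n r then aa p n k i r * (K y * tp k (knot p n r) y) else 0)
    + (\<Sum>q\<le>k. bb p n k i q * (K y * tp q 1 y)))"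
    by (rule ext) (simp add: Rep_def distrib_left sum_distrib_left mult.left_commute if_distrib cong: if_cong)
  have A: "((\<lambda>y. \<Sum>r=i..i+k+1. if intr p n r then aa p n k i r * (K y * tp k (knot p n r) y) else 0)
      has_integral (\<Sum>r=i..i+k+1. if intr p n r then aa p n k i r * F k (knot p n r) else 0)) S"
  proof (rule has_integral_sum, simp)
    fix r assume r: "r \<in> {i..i+k+1}"
    show "((\<lambda>y. if intr p n r then aa p n k i r * (K y * tp k (knot p n r) y) else 0)
      has_integral (if intr p n r then aa p n k i r * F k (knot p n r) else 0)) S"
      by (cases "intr p n r") (auto intro!: has_integral_mult_right h RC_r[OF n r])
  qed
  have B: "((\<lambda>y. \<Sum>q\<le>k. bb p n k i q * (K y * tp q 1 y)) has_integral (\<Sum>q\<le>k. bb p n k i q * F q 1)) S"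
    by (rule has_integral_sum) (auto intro!: has_integral_mult_right h RC_1[OF n])
  have C: "((\<lambda>y. (\<Sum>r=i..i+k+1. if intr p n r then aa p n k i r * (K y * tp k (knot p n r) y) else 0)
    + (\<Sum>q\<le>k. bb p n k i q * (K y * tp q 1 y))) has_integral Rep F p n k i) S"
    using has_integral_add[OF A B] unfolding Rep_def .
  show ?thesis unfolding eq by (rule C)
qed

lemma Rep_deriv:
  assumes n: "1 \<le> n"
    and h: "\<And>m c. RC p n k i m c \<Longrightarrow> ((F m c) has_real_derivative F' m c) (at x)"
  shows "((\<lambda>t. Rep (\<lambda>m c. F m c t) p n k i) has_real_derivative Rep F' p n k i) (at x)"
proof -
  have A: "((\<lambda>t. \<Sum>r=i..i+k+1. if intr p n r then aa p n k i r * F k (knot p n r) t else 0)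
      has_real_derivative (\<Sum>r=i..i+k+1. if intr p n r then aa p n k i r * F' k (knot p n r) else 0)) (at x)"
  proof (rule DERIV_sum)
    fix r assume r: "r \<in> {i..i+k+1}"
    show "((\<lambda>t. if intr p n r then aa p n k i r * F k (knot p n r) t else 0)
      has_real_derivative (if intr p n r then aa p n k i r * F' k (knot p n r) else 0)) (at x)"
      by (cases "intr p n r") (auto intro!: DERIV_cmult h RC_r[OF n r])
  qed
  have B: "((\<lambda>t. \<Sum>q\<le>k. bb p n k i q * F q 1 t) has_real_derivative (\<Sum>q\<le>k. bb p n k i q * F' q 1)) (at x)"
    by (rule DERIV_sum) (auto intro!: DERIV_cmult h RC_1[OF n])
  show ?thesis unfolding Rep_def by (rule DERIV_add[OF A B])
qed

lemma rl_near:
  assumes n: "1 \<le> n" and k: "2 \<le> k" and al: "1 < \<alpha>" "\<alpha> < 2" and x: "0 < x" "x < 1"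
  shows "rl_right_deriv \<alpha> (bspline p n k i) x =
    Rep (\<lambda>m c. Bt \<alpha> m * (real m + 2 - \<alpha>) * (real m + 1 - \<alpha>) * pp (real m - \<alpha>) (c - x)) p n k i / Gamma (2 - \<alpha>)"
proof -
  define g where "g = (\<lambda>t. integral {t..1} (\<lambda>y. (y - t) powr (1 - \<alpha>) * bspline p n k i y))"
  define \<Phi> where "\<Phi> = (\<lambda>t. Rep (\<lambda>m c. Bt \<alpha> m * pp (real m + 2 - \<alpha>) (c - t)) p n k i)"
  define \<Phi>1 where "\<Phi>1 = (\<lambda>t. Rep (\<lambda>m c. Bt \<alpha> m * (- (real m + 2 - \<alpha>) * pp (real m + 2 - \<alpha> - 1) (c - t))) p n k i)"
  define \<Phi>2 where "\<Phi>2 = Rep (\<lambda>m c. Bt \<alpha> m * (real m + 2 - \<alpha>) * (real m + 1 - \<alpha>) * pp (real m - \<alpha>) (c - x)) p n k i"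
  have gP: "g t = \<Phi> t" if t: "0 < t" "t < 1" for t
  proof -
    have "((\<lambda>y. (y - t) powr (1 - \<alpha>) * Rep (\<lambda>m c. tp m c y) p n k i) has_integral \<Phi> t) {t..1}"
      unfolding \<Phi>_def
      by (rule Rep_integral[OF n]) (rule KT, use al t in \<open>auto simp: RC_def\<close>)
    hence "((\<lambda>y. (y - t) powr (1 - \<alpha>) * bspline p n k i y) has_integral \<Phi> t) {t..1}"
      by (rule has_integral_eq[rotated]) (use t in \<open>simp add: bspline_rep[OF n] Rep_tp\<close>)
    thus ?thesis unfolding g_def by (rule integral_unique)
  qed
  have dP: "(\<Phi> has_real_derivative \<Phi>1 t) (at t)" if t: "0 < t" "t < 1" for t
    unfolding \<Phi>_def \<Phi>1_def
  proof (rule Rep_deriv[OF n])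
    fix m c assume "RC p n k i m c"
    hence "1 < real m + 2 - \<alpha> \<or> t < c" using t al k unfolding RC_def by auto
    thus "((\<lambda>t. Bt \<alpha> m * pp (real m + 2 - \<alpha>) (c - t)) has_real_derivative
        Bt \<alpha> m * (- (real m + 2 - \<alpha>) * pp (real m + 2 - \<alpha> - 1) (c - t))) (at t)"
      by (intro DERIV_cmult pp_deriv)
  qed
  have dg: "deriv g t = \<Phi>1 t" if t: "0 < t" "t < 1" for t
  proof (rule DERIV_imp_deriv)
    show "(g has_real_derivative \<Phi>1 t) (at t)"
      by (rule has_field_derivative_transform_within_open[OF dP[OF t], of "{0<..<1}"])
         (use t gP in auto)
  qed
  have dP1: "(\<Phi>1 has_real_derivative \<Phi>2) (at x)"
    unfolding \<Phi>1_def \<Phi>2_def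
  proof (rule Rep_deriv[OF n])
    fix m c assume "RC p n k i m c"
    hence c: "1 < real m + 2 - \<alpha> - 1 \<or> x < c" using x al k unfolding RC_def by auto
    have "((\<lambda>t. Bt \<alpha> m * (- (real m + 2 - \<alpha>) * pp (real m + 2 - \<alpha> - 1) (c - t))) has_real_derivative
        Bt \<alpha> m * (- (real m + 2 - \<alpha>) * (- (real m + 2 - \<alpha> - 1) * pp (real m + 2 - \<alpha> - 1 - 1) (c - x)))) (at x)"
      by (intro DERIV_cmult pp_deriv c)
    moreover have "Bt \<alpha> m * (- (real m + 2 - \<alpha>) * (- (real m + 2 - \<alpha> - 1) * pp (real m + 2 - \<alpha> - 1 - 1) (c - x)))
        = Bt \<alpha> m * (real m + 2 - \<alpha>) * (real m + 1 - \<alpha>) * pp (real m - \<alpha>) (c - x)"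
      by (simp add: algebra_simps)
    ultimately show "((\<lambda>t. Bt \<alpha> m * (- (real m + 2 - \<alpha>) * pp (real m + 2 - \<alpha> - 1) (c - t))) has_real_derivative
        Bt \<alpha> m * (real m + 2 - \<alpha>) * (real m + 1 - \<alpha>) * pp (real m - \<alpha>) (c - x)) (at x)" by (rule DERIV_cong)
  qed
  have "deriv (deriv g) x = \<Phi>2"
  proof (rule DERIV_imp_deriv)
    show "(deriv g has_real_derivative \<Phi>2) (at x)"
      by (rule has_field_derivative_transform_within_open[OF dP1, of "{0<..<1}"])
         (use x dg in auto)
  qed
  thus ?thesis unfolding rl_right_deriv_def g_def \<Phi>2_def by (simp add: Let_def)
qed

lemma Gd_gen:
  fixes C e a c t :: real
  assumes "t < a"
  shows "((\<lambda>t. integral {a..c} (\<lambda>y. C * (y - t) powr e * (c - y) ^ m)) has_real_derivative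
          integral {a..c} (\<lambda>y. (C * - e) * (y - t) powr (e - 1) * (c - y) ^ m)) (at t)"
proof -
  have U: "t \<in> {..<a}" "convex {..<a::real}" using assms by auto
  have "((\<lambda>t. integral (cbox a c) (\<lambda>y. C * (y - t) powr e * (c - y) ^ m)) has_field_derivative
          integral (cbox a c) (\<lambda>y. (C * - e) * (y - t) powr (e - 1) * (c - y) ^ m)) (at t within {..<a})"
  proof (rule leibniz_rule_field_derivative[where fx = "\<lambda>t y. (C * - e) * (y - t) powr (e - 1) * (c - y) ^ m"])
    fix t' y :: real assume ty: "t' \<in> {..<a}" "y \<in> cbox a c"
    hence pos: "0 < y - t'" by (auto simp: cbox_interval)
    have "((\<lambda>t. C * (y - t) powr e * (c - y) ^ m) has_field_derivative
            C * (e * (y - t') powr (e - 1) * (0 - 1)) * (c - y) ^ m) (at t')"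
      using pos by (auto intro!: derivative_eq_intros)
    hence "((\<lambda>t. C * (y - t) powr e * (c - y) ^ m) has_field_derivative
            (C * - e) * (y - t') powr (e - 1) * (c - y) ^ m) (at t')"
      by (rule DERIV_cong) (simp add: algebra_simps)
    thus "((\<lambda>t. C * (y - t) powr e * (c - y) ^ m) has_field_derivative
            (C * - e) * (y - t') powr (e - 1) * (c - y) ^ m) (at t' within {..<a})"
      by (rule has_field_derivative_at_within)
  next
    fix t' :: real assume "t' \<in> {..<a}"
    hence "\<forall>y\<in>{a..c}. 0 < y - t'" by auto
    hence "continuous_on {a..c} (\<lambda>y. C * (y - t') powr e * (c - y) ^ m)"
      by (intro continuous_intros continuous_on_powr) auto
    thus "(\<lambda>y. C * (y - t') powr e * (c - y) ^ m) integrable_on cbox a c"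
      unfolding cbox_interval by (rule integrable_continuous_interval)
  next
    have "\<forall>z\<in>{..<a} \<times> cbox a c. snd z - fst z \<noteq> 0" by (auto simp: cbox_interval)
    hence "continuous_on ({..<a} \<times> cbox a c) (\<lambda>z. (C * - e) * (snd z - fst z) powr (e - 1) * (c - snd z) ^ m)"
      by (intro continuous_intros continuous_on_powr) auto
    thus "continuous_on ({..<a} \<times> cbox a c) (\<lambda>(t, y). (C * - e) * (y - t) powr (e - 1) * (c - y) ^ m)"
      by (simp add: case_prod_beta')
  qed (use U in auto)
  moreover have "at t within {..<a} = at t" using U(1) by (intro at_within_open) auto
  ultimately show ?thesis by (simp add: cbox_interval)
qed

lemma cont_int:
  fixes C e a c t :: real
  assumes "t < a"
  shows "((\<lambda>y. C * (y - t) powr e * (c - y) ^ m) has_integral integral {a..c} (\<lambda>y. C * (y - t) powr e * (c - y) ^ m)) {a..c}"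
proof -
  have "\<forall>y\<in>{a..c}. 0 < y - t" using assms by auto
  hence "continuous_on {a..c} (\<lambda>y. C * (y - t) powr e * (c - y) ^ m)"
    by (intro continuous_intros continuous_on_powr) auto
  hence "(\<lambda>y. C * (y - t) powr e * (c - y) ^ m) integrable_on {a..c}"
    by (rule integrable_continuous_interval)
  thus ?thesis by (rule integrable_integral)
qed

lemma rl_far:
  assumes n: "1 \<le> n" and al: "1 < \<alpha>" "\<alpha> < 2" and x: "0 < x" "x < knot p n i"
  shows "\<exists>W. ((\<lambda>y. (\<alpha> - 1) * \<alpha> * (y - x) powr (- \<alpha> - 1) * bspline p n k i y) has_integral W) {knot p n i..1}
           \<and> rl_right_deriv \<alpha> (bspline p n k i) x = W / Gamma (2 - \<alpha>)"
proof -
  define a where "a = knot p n i"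
  have a1: "a \<le> 1" using knot_le1[OF n] by (simp add: a_def)
  define G where "G = (\<lambda>C e m c t. integral {a..c} (\<lambda>y. C * (y - t) powr e * (c - y) ^ m))"
  define g where "g = (\<lambda>t. integral {t..1} (\<lambda>y. (y - t) powr (1 - \<alpha>) * bspline p n k i y))"
  define \<Psi> where "\<Psi> = (\<lambda>t. Rep (\<lambda>m c. G 1 (1 - \<alpha>) m c t) p n k i)"
  define \<Psi>1 where "\<Psi>1 = (\<lambda>t. Rep (\<lambda>m c. G (1 * - (1 - \<alpha>)) (1 - \<alpha> - 1) m c t) p n k i)"
  define \<Psi>2 where "\<Psi>2 = Rep (\<lambda>m c. G ((1 * - (1 - \<alpha>)) * - (1 - \<alpha> - 1)) (1 - \<alpha> - 1 - 1) m c x) p n k i"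
  have RCa: "a \<le> c" if "RC p n k i m c" for m c using that by (simp add: RC_def a_def)
  have RCc: "c \<le> 1" if "RC p n k i m c" for m c using that by (simp add: RC_def)
  have repint: "((\<lambda>y. (C * (y - t) powr e) * Rep (\<lambda>m c. tp m c y) p n k i) has_integral
          Rep (\<lambda>m c. G C e m c t) p n k i) {a..1}" if t: "t < a" for C e t
    by (rule Rep_integral[OF n], rule GL[OF RCa RCc], assumption+)
       (use cont_int[OF t] in \<open>simp add: G_def\<close>)
  have eqa: "C * (y - t) powr e * Rep (\<lambda>m c. tp m c y) p n k i = C * (y - t) powr e * bspline p n k i y"
    if "y \<in> {a..1}" "0 < a" for C e t y
  proof -
    have "0 < y" using that by auto
    hence "bspline p n k i y = Rep (\<lambda>m c. tp m c y) p n k i"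
      by (simp only: bspline_rep[OF n] Rep_tp)
    thus ?thesis by simp
  qed
  have a0: "0 < a" using x by (simp add: a_def)
  have gP: "g t = \<Psi> t" if t: "0 < t" "t < a" for t
  proof -
    have 1: "((\<lambda>y. (y - t) powr (1 - \<alpha>) * bspline p n k i y) has_integral 0) {t..a}"
    proof (rule has_integral_spike[OF negligible_sing[of a] _ has_integral_0])
      fix y assume "y \<in> {t..a} - {a}"
      hence "y < knot p n i" by (auto simp: a_def)
      thus "(y - t) powr (1 - \<alpha>) * bspline p n k i y = 0" using bspline_supp[OF n] by auto
    qed
    have 2: "((\<lambda>y. (y - t) powr (1 - \<alpha>) * bspline p n k i y) has_integral \<Psi> t) {a..1}"
      unfolding \<Psi>_def
    proof (rule has_integral_eq[OF _ repint[OF t(2), of 1 "1 - \<alpha>"]])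
      fix y assume "y \<in> {a..1}"
      from eqa[OF this a0, where C=1 and e="1 - \<alpha>" and t=t]
      show "1 * (y - t) powr (1 - \<alpha>) * Rep (\<lambda>m c. tp m c y) p n k i = (y - t) powr (1 - \<alpha>) * bspline p n k i y"
        by simp
    qed
    have "((\<lambda>y. (y - t) powr (1 - \<alpha>) * bspline p n k i y) has_integral (0 + \<Psi> t)) {t..1}"
      by (rule has_integral_combine[OF _ a1 1 2]) (use t in simp)
    thus ?thesis unfolding g_def by (simp add: integral_unique)
  qed
  have dP: "(\<Psi> has_real_derivative \<Psi>1 t) (at t)" if t: "t < a" for t
    unfolding \<Psi>_def \<Psi>1_def G_def
    by (rule Rep_deriv[OF n]) (rule Gd_gen[OF t])
  have dg: "deriv g t = \<Psi>1 t" if t: "0 < t" "t < a" for t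
  proof (rule DERIV_imp_deriv)
    show "(g has_real_derivative \<Psi>1 t) (at t)"
      by (rule has_field_derivative_transform_within_open[OF dP[OF t(2)], of "{0<..<a}"])
         (use t gP in auto)
  qed
  have dP1: "(\<Psi>1 has_real_derivative \<Psi>2) (at x)"
    unfolding \<Psi>1_def \<Psi>2_def G_def
    by (rule Rep_deriv[OF n]) (rule Gd_gen, use x in \<open>simp add: a_def\<close>)
  have dd: "deriv (deriv g) x = \<Psi>2"
  proof (rule DERIV_imp_deriv)
    show "(deriv g has_real_derivative \<Psi>2) (at x)"
      by (rule has_field_derivative_transform_within_open[OF dP1, of "{0<..<a}"])
         (use x dg in \<open>auto simp: a_def\<close>)
  qed
  have cst: "(1 * - (1 - \<alpha>)) * - (1 - \<alpha> - 1) = (\<alpha> - 1) * \<alpha>" "1 - \<alpha> - 1 - 1 = - \<alpha> - 1"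
    by (simp_all add: algebra_simps)
  have xa: "x < a" using x by (simp add: a_def)
  have W: "((\<lambda>y. (\<alpha> - 1) * \<alpha> * (y - x) powr (- \<alpha> - 1) * bspline p n k i y) has_integral \<Psi>2) {a..1}"
    unfolding \<Psi>2_def cst
  proof (rule has_integral_eq[OF _ repint[OF xa, of "(\<alpha> - 1) * \<alpha>" "- \<alpha> - 1"]])
    fix y assume "y \<in> {a..1}"
    from eqa[OF this a0, where C="(\<alpha> - 1) * \<alpha>" and e="- \<alpha> - 1" and t=x]
    show "(\<alpha> - 1) * \<alpha> * (y - x) powr (- \<alpha> - 1) * Rep (\<lambda>m c. tp m c y) p n k i =
          (\<alpha> - 1) * \<alpha> * (y - x) powr (- \<alpha> - 1) * bspline p n k i y" .
  qed
  show ?thesis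
  proof (intro exI conjI)
    show "((\<lambda>y. (\<alpha> - 1) * \<alpha> * (y - x) powr (- \<alpha> - 1) * bspline p n k i y) has_integral \<Psi>2) {knot p n i..1}"
      using W by (simp only: a_def)
    show "rl_right_deriv \<alpha> (bspline p n k i) x = \<Psi>2 / Gamma (2 - \<alpha>)"
      using dd unfolding rl_right_deriv_def g_def Let_def by simp
  qed
qed

lemma cs_row:
  fixes M :: "nat \<Rightarrow> real" and x :: "nat \<Rightarrow> real"
  shows "(\<Sum>j\<in>J. M j * x j)\<^sup>2 \<le> (\<Sum>j\<in>J. \<bar>M j\<bar>) * (\<Sum>j\<in>J. \<bar>M j\<bar> * (x j)\<^sup>2)"
proof -
  have "\<bar>\<Sum>j\<in>J. M j * x j\<bar> \<le> (\<Sum>j\<in>J. sqrt \<bar>M j\<bar> * (sqrt \<bar>M j\<bar> * \<bar>x j\<bar>))"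
    by (rule order.trans[OF sum_abs]) (simp add: abs_mult mult.assoc[symmetric])
  hence "(\<Sum>j\<in>J. M j * x j)\<^sup>2 \<le> (\<Sum>j\<in>J. sqrt \<bar>M j\<bar> * (sqrt \<bar>M j\<bar> * \<bar>x j\<bar>))\<^sup>2"
    by (metis abs_ge_zero power2_abs power_mono)
  also have "\<dots> \<le> (\<Sum>j\<in>J. (sqrt \<bar>M j\<bar>)\<^sup>2) * (\<Sum>j\<in>J. (sqrt \<bar>M j\<bar> * \<bar>x j\<bar>)\<^sup>2)"
    by (rule Cauchy_Schwarz_ineq_sum)
  also have "\<dots> = (\<Sum>j\<in>J. \<bar>M j\<bar>) * (\<Sum>j\<in>J. \<bar>M j\<bar> * (x j)\<^sup>2)"
    by (simp add: power_mult_distrib)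
  finally show ?thesis .
qed

lemma norms_bound:
  fixes M :: "nat \<Rightarrow> nat \<Rightarrow> real"
  assumes m: "1 \<le> m"
    and row: "\<And>i. i \<in> {1..m} \<Longrightarrow> (\<Sum>j=1..m. \<bar>M i j\<bar>) \<le> S"
    and col: "\<And>j. j \<in> {1..m} \<Longrightarrow> (\<Sum>i=1..m. \<bar>M i j\<bar>) \<le> S"
  shows "mat_norm_1 m M \<le> S \<and> mat_norm_2 m M \<le> S \<and> mat_norm_inf m M \<le> S"
proof (intro conjI)
  have "0 \<le> (\<Sum>i = 1..m. \<bar>M i 1\<bar>)" by (simp add: sum_nonneg)
  moreover have "(\<Sum>i = 1..m. \<bar>M i 1\<bar>) \<le> S" using col[of 1] m by simp
  ultimately have S0: "0 \<le> S" by linarith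
  show "mat_norm_1 m M \<le> S" unfolding mat_norm_1_def
  proof (rule Max.boundedI)
    show "(\<lambda>j. \<Sum>i = 1..m. \<bar>M i j\<bar>) ` {1..m} \<noteq> {}" using m by auto
  next
    fix a assume "a \<in> (\<lambda>j. \<Sum>i = 1..m. \<bar>M i j\<bar>) ` {1..m}"
    then obtain j where "j \<in> {1..m}" "a = (\<Sum>i = 1..m. \<bar>M i j\<bar>)" by blast
    thus "a \<le> S" using col by blast
  qed simp
  show "mat_norm_inf m M \<le> S" unfolding mat_norm_inf_def
  proof (rule Max.boundedI)
    show "(\<lambda>i. \<Sum>j = 1..m. \<bar>M i j\<bar>) ` {1..m} \<noteq> {}" using m by auto
  next
    fix a assume "a \<in> (\<lambda>i. \<Sum>j = 1..m. \<bar>M i j\<bar>) ` {1..m}"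
    then obtain i where "i \<in> {1..m}" "a = (\<Sum>j = 1..m. \<bar>M i j\<bar>)" by blast
    thus "a \<le> S" using row by blast
  qed simp
  show "mat_norm_2 m M \<le> S" unfolding mat_norm_2_def
  proof (rule cSUP_least)
    show "{x::nat\<Rightarrow>real. (\<Sum>j = 1..m. (x j)\<^sup>2) = 1} \<noteq> {}"
    proof -
      have "(\<Sum>j = 1..m. ((\<lambda>j. if j = 1 then 1 else 0 :: real) j)\<^sup>2) = (\<Sum>j = 1..m. if j = 1 then 1 else 0)"
        by (rule sum.cong) auto
      also have "\<dots> = 1" using m by (simp add: sum.delta)
      finally have "(\<Sum>j = 1..m. ((\<lambda>j. if j = 1 then 1 else 0 :: real) j)\<^sup>2) = 1" .
      hence "(\<lambda>j. if j = 1 then 1 else 0 :: real) \<in> {x::nat\<Rightarrow>real. (\<Sum>j = 1..m. (x j)\<^sup>2) = 1}" by (simp only: mem_Collect_eq)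
      thus ?thesis by (metis empty_iff)
    qed
  next
    fix x :: "nat \<Rightarrow> real" assume "x \<in> {x. (\<Sum>j = 1..m. (x j)\<^sup>2) = 1}"
    hence x1: "(\<Sum>j = 1..m. (x j)\<^sup>2) = 1" by simp
    have "(\<Sum>i = 1..m. (\<Sum>j = 1..m. M i j * x j)\<^sup>2)
        \<le> (\<Sum>i = 1..m. S * (\<Sum>j = 1..m. \<bar>M i j\<bar> * (x j)\<^sup>2))"
    proof (rule sum_mono)
      fix i assume i: "i \<in> {1..m}"
      have "(\<Sum>j = 1..m. M i j * x j)\<^sup>2 \<le> (\<Sum>j=1..m. \<bar>M i j\<bar>) * (\<Sum>j = 1..m. \<bar>M i j\<bar> * (x j)\<^sup>2)"
        by (rule cs_row)
      also have "\<dots> \<le> S * (\<Sum>j = 1..m. \<bar>M i j\<bar> * (x j)\<^sup>2)"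
        by (rule mult_right_mono[OF row[OF i]]) (simp add: sum_nonneg)
      finally show "(\<Sum>j = 1..m. M i j * x j)\<^sup>2 \<le> S * (\<Sum>j = 1..m. \<bar>M i j\<bar> * (x j)\<^sup>2)" .
    qed
    also have "\<dots> = S * (\<Sum>j = 1..m. (\<Sum>i = 1..m. \<bar>M i j\<bar>) * (x j)\<^sup>2)"
    proof -
      have e1: "(\<Sum>i = 1..m. \<Sum>j = 1..m. \<bar>M i j\<bar> * (x j)\<^sup>2) = (\<Sum>j = 1..m. \<Sum>i = 1..m. \<bar>M i j\<bar> * (x j)\<^sup>2)"
        by (rule sum.swap)
      have e2: "(\<Sum>j = 1..m. \<Sum>i = 1..m. \<bar>M i j\<bar> * (x j)\<^sup>2) = (\<Sum>j = 1..m. (\<Sum>i = 1..m. \<bar>M i j\<bar>) * (x j)\<^sup>2)"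
        by (simp only: sum_distrib_right)
      show ?thesis by (simp only: sum_distrib_left[symmetric] e1 e2)
    qed
    also have "\<dots> \<le> S * (\<Sum>j = 1..m. S * (x j)\<^sup>2)"
    proof (rule mult_left_mono[OF sum_mono S0])
      fix j assume j: "j \<in> {1..m}"
      show "(\<Sum>i = 1..m. \<bar>M i j\<bar>) * (x j)\<^sup>2 \<le> S * (x j)\<^sup>2"
        by (rule mult_right_mono[OF col[OF j]]) simp
    qed
    also have "\<dots> = S * S" by (simp only: sum_distrib_left[symmetric] x1 mult_1_right)
    finally have "(\<Sum>i = 1..m. (\<Sum>j = 1..m. M i j * x j)\<^sup>2) \<le> S\<^sup>2" by (simp add: power2_eq_square)
    hence "sqrt (\<Sum>i = 1..m. (\<Sum>j = 1..m. M i j * x j)\<^sup>2) \<le> sqrt (S\<^sup>2)" by (rule real_sqrt_le_mono)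
    thus "sqrt (\<Sum>i = 1..m. (\<Sum>j = 1..m. M i j * x j)\<^sup>2) \<le> S" using S0 by simp
  qed
qed

lemma grev_eq: "greville p n (Suc i) = (\<Sum>k=i+2..i+p+1. knot p n k) / real p"
  unfolding greville_def by (simp add: add.commute add.left_commute)

lemma grev_lo:
  assumes n: "1 \<le> n" and p: "1 \<le> p"
  shows "knot p n (i+2) \<le> greville p n (Suc i)"
proof -
  have "(\<Sum>k=i+2..i+p+1. knot p n (i+2)) \<le> (\<Sum>k=i+2..i+p+1. knot p n k)"
    by (rule sum_mono) (auto intro: knot_mono[OF n])
  hence "real p * knot p n (i+2) \<le> (\<Sum>k=i+2..i+p+1. knot p n k)" by simp
  thus ?thesis using p by (simp add: grev_eq field_simps)
qed

lemma grev_hi: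
  assumes n: "1 \<le> n" and p: "1 \<le> p"
  shows "greville p n (Suc i) \<le> knot p n (i+p+1)"
proof -
  have "(\<Sum>k=i+2..i+p+1. knot p n k) \<le> (\<Sum>k=i+2..i+p+1. knot p n (i+p+1))"
    by (rule sum_mono) (auto intro: knot_mono[OF n])
  hence "(\<Sum>k=i+2..i+p+1. knot p n k) \<le> real p * knot p n (i+p+1)" by simp
  thus ?thesis using p by (simp add: grev_eq field_simps)
qed

lemma grev_pos:
  assumes n: "1 \<le> n" and p: "1 \<le> p" and i: "1 \<le> i"
  shows "0 < greville p n (Suc i)"
proof -
  have k1: "knot p n (p+2) = 1 / real n" using n by (simp add: knot_alt)
  have "knot p n (p+2) \<le> knot p n (i+p+1)" using i by (intro knot_mono[OF n]) auto
  moreover have "0 < 1 / real n" using n by simp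
  ultimately have pos: "0 < knot p n (i+p+1)" using k1 by linarith
  have "knot p n (i+p+1) \<le> (\<Sum>k=i+2..i+p+1. knot p n k)"
    by (rule member_le_sum) (use p in \<open>auto simp: knot_nonneg\<close>)
  thus ?thesis using pos p by (simp add: grev_eq)
qed

lemma grev_lt1:
  assumes n: "1 \<le> n" and p: "1 \<le> p" and i: "i \<le> n + p - 2"
  shows "greville p n (Suc i) \<le> 1 - 1 / (real n * real p)"
proof -
  have np: "real n > 0" using n by simp
  have a: "knot p n (i+2) \<le> 1 - 1 / real n"
  proof -
    have "min n (i + 2 - Suc p) \<le> n - 1" using i p n by (simp add: min_def, arith)
    hence "real (min n (i + 2 - Suc p)) \<le> real n - 1" using n by linarith
    thus ?thesis using np by (simp add: knot_alt[OF n] field_simps)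
  qed
  have "(\<Sum>k=i+2..i+p+1. knot p n k) = knot p n (i+2) + (\<Sum>k=i+3..i+p+1. knot p n k)"
    using p by (subst sum.atLeast_Suc_atMost) (auto simp: numeral_3_eq_3)
  also have "(\<Sum>k=i+3..i+p+1. knot p n k) \<le> (\<Sum>k=i+3..i+p+1. 1)"
    by (rule sum_mono) (simp add: knot_le1[OF n])
  also have "(\<Sum>k=i+3..i+p+1. (1::real)) = real p - 1" using p by simp
  finally have "(\<Sum>k=i+2..i+p+1. knot p n k) \<le> real p - 1 / real n" using a by simp
  hence "(\<Sum>k=i+2..i+p+1. knot p n k) / real p \<le> (real p - 1 / real n) / real p"
    using p by (simp add: divide_right_mono)
  also have "\<dots> = 1 - 1 / (real n * real p)" using p np by (simp add: field_simps)
  finally show ?thesis by (simp add: grev_eq)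
qed

lemma idx_R1:
  assumes n: "1 \<le> n" and p: "1 \<le> p" and j: "j \<le> n + p - 2"
  shows "(real j - real p - real i) / real n \<le> knot p n (j+1) - greville p n (Suc i)"
proof -
  have np: "real n > 0" using n by simp
  have "real (j+1) - real p - 1 \<le> knot p n (j+1) * n" by (rule knot_lower[OF n]) (use j in simp)
  moreover have "knot p n (i+p+1) * n \<le> real i"
    using knot_upper[OF n, of p "i+p+1"] by auto
  moreover have "greville p n (Suc i) * n \<le> knot p n (i+p+1) * n"
    using grev_hi[OF n p, of i] np by (simp add: mult_right_mono)
  ultimately have "real j - real p - real i \<le> (knot p n (j+1) - greville p n (Suc i)) * n"
    by (simp add: algebra_simps)
  thus ?thesis using np by (simp add: field_simps)
qed

lemma idx_R3:
  assumes n: "1 \<le> n" and p: "1 \<le> p" and i: "i \<le> n + p - 2"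
  shows "(real i - real j - real p) / real n \<le> greville p n (Suc i) - knot p n (j+p+2)"
proof -
  have np: "real n > 0" using n by simp
  have "real (i+2) - real p - 1 \<le> knot p n (i+2) * n" by (rule knot_lower[OF n]) (use i p in simp)
  moreover have "knot p n (j+p+2) * n \<le> real j + 1"
    using knot_upper[OF n, of p "j+p+2"] by auto
  moreover have "knot p n (i+2) * n \<le> greville p n (Suc i) * n"
    using grev_lo[OF n p, of i] np by (simp add: mult_right_mono)
  ultimately have "real i - real j - real p \<le> (greville p n (Suc i) - knot p n (j+p+2)) * n"
    by (simp add: algebra_simps)
  thus ?thesis using np by (simp add: field_simps)
qed

lemma H1:
  fixes N c \<alpha> :: real
  assumes "0 < N" "0 < c"
  shows "N powr (- \<alpha>) * N ^ p * (c / N) powr (real p - \<alpha>) = c powr (real p - \<alpha>)"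
proof -
  have "N powr (- \<alpha>) * N ^ p = N powr (real p - \<alpha>)"
    using assms by (simp add: powr_realpow[symmetric] powr_add[symmetric])
  moreover have "(c / N) powr (real p - \<alpha>) = c powr (real p - \<alpha>) / N powr (real p - \<alpha>)"
    by (rule powr_divide)
  ultimately show ?thesis using assms by simp
qed

lemma H2:
  fixes N c P \<alpha> :: real
  assumes "0 < N" "0 < c" "0 < P"
  shows "N powr (- \<alpha>) * N ^ q * (c / N) ^ q * (1 / (N * P)) powr (- \<alpha>) = c ^ q * P powr \<alpha>"
proof -
  have e1: "(1 / (N * P)) powr (- \<alpha>) = N powr \<alpha> * P powr \<alpha>"
    using assms by (simp add: powr_divide powr_mult powr_minus_divide)
  have e2: "N ^ q * (c / N) ^ q = c ^ q" using assms by (simp add: power_divide)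
  have e3: "N powr (- \<alpha>) * N powr \<alpha> = 1" using assms by (simp add: powr_add[symmetric])
  have "N powr (- \<alpha>) * N ^ q * (c / N) ^ q * (1 / (N * P)) powr (- \<alpha>)
      = (N powr (- \<alpha>) * N powr \<alpha>) * (N ^ q * (c / N) ^ q) * P powr \<alpha>"
    unfolding e1 by (simp only: mult_ac)
  thus ?thesis by (simp only: e2 e3 mult_1_left)
qed

lemma H3:
  fixes c \<alpha> :: real
  assumes "1 \<le> c" "0 \<le> \<alpha>"
  shows "c powr (real p - \<alpha>) \<le> c ^ p"
proof -
  have "c powr (real p - \<alpha>) \<le> c powr (real p)" using assms by (intro powr_mono) auto
  thus ?thesis using assms by (simp add: powr_realpow)
qed

lemma H4:
  fixes P \<alpha> :: real
  assumes "1 \<le> P" "\<alpha> \<le> 2"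
  shows "P powr \<alpha> \<le> P ^ 2"
proof -
  have "P powr \<alpha> \<le> P powr (real 2)" using assms by (intro powr_mono) auto
  thus ?thesis using assms by (simp add: powr_realpow)
qed

lemma H5:
  fixes N d \<alpha> :: real
  assumes "0 < N" "0 < d"
  shows "N powr (- \<alpha>) * (d / N) powr (- \<alpha> - 1) * (1 / N) = d powr (- \<alpha> - 1)"
proof -
  have "(d / N) powr (- \<alpha> - 1) = d powr (- \<alpha> - 1) / N powr (- \<alpha> - 1)" by (rule powr_divide)
  moreover have "N powr (- \<alpha>) / N powr (- \<alpha> - 1) = N" using assms
    by (simp add: powr_diff[symmetric])
  ultimately show ?thesis using assms by (simp add: field_simps)
qed

definition KK :: "real \<Rightarrow> nat \<Rightarrow> real" where
  "KK \<alpha> p = (\<Sum>q\<le>p. \<bar>Bt \<alpha> q * (real q + 2 - \<alpha>) * (real q + 1 - \<alpha>)\<bar>)"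

definition CN :: "real \<Rightarrow> nat \<Rightarrow> real" where
  "CN \<alpha> p = (real (p+2) * (real (p+1) * KK \<alpha> p * (2 * real p) ^ p)
              + real (p+1) * (3 ^ p * KK \<alpha> p * (2 * real p) ^ p * real p ^ 2)) / Gamma (2 - \<alpha>)"

lemma Kc_le: "q \<le> p \<Longrightarrow> \<bar>Bt \<alpha> q * (real q + 2 - \<alpha>) * (real q + 1 - \<alpha>)\<bar> \<le> KK \<alpha> p"
  unfolding KK_def by (rule member_le_sum) auto

lemma KK_nonneg: "0 \<le> KK \<alpha> p" unfolding KK_def by (simp add: sum_nonneg)

lemma pp_nonneg: "0 \<le> pp e z" by (simp add: pp_def)

lemma pp_le:
  assumes "z \<le> B" "0 \<le> e" "0 < B"
  shows "pp e z \<le> B powr e"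
  using assms by (auto simp: pp_def intro: powr_mono2)

lemma grev_facts:
  assumes n: "1 \<le> n" and p: "2 \<le> p" and i: "1 \<le> i" "i \<le> n+p-2"
  shows "0 < greville p n (Suc i)" "greville p n (Suc i) < 1"
        "1 / (real n * real p) \<le> 1 - greville p n (Suc i)"
proof -
  show "0 < greville p n (Suc i)" using grev_pos[OF n _ i(1)] p by simp
  have "greville p n (Suc i) \<le> 1 - 1 / (real n * real p)" using grev_lt1[OF n _ i(2)] p by simp
  moreover have "0 < 1 / (real n * real p)" using n p by simp
  ultimately show "greville p n (Suc i) < 1" "1 / (real n * real p) \<le> 1 - greville p n (Suc i)" by linarith+
qed

lemma zero_entry:
  assumes n: "1 \<le> n" and p: "2 \<le> p" and al: "1 < \<alpha>" "\<alpha> < 2"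
    and i: "1 \<le> i" "i \<le> n+p-2" and ij: "j + p \<le> i"
  shows "A_R \<alpha> p n i j = 0"
proof -
  define x where "x = greville p n (Suc i)"
  have x: "0 < x" "x < 1" using grev_facts[OF n p i] by (simp_all add: x_def)
  have "(real i - real j - real p) / real n \<le> x - knot p n (j+p+2)"
    unfolding x_def by (rule idx_R3[OF n _ i(2)]) (use p in simp)
  moreover have "0 \<le> (real i - real j - real p) / real n" using ij by simp
  ultimately have bx: "knot p n (Suc j + p + 1) \<le> x" by simp
  define F where "F = (\<lambda>m c. Bt \<alpha> m * (real m + 2 - \<alpha>) * (real m + 1 - \<alpha>) * pp (real m - \<alpha>) (c - x))"
  have s1: "(\<Sum>r=Suc j..Suc j+p+1. if intr p n r then aa p n p (Suc j) r * F p (knot p n r) else 0) = 0"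
  proof (rule sum.neutral, rule ballI)
    fix r assume "r \<in> {Suc j..Suc j+p+1}"
    hence "knot p n r \<le> knot p n (Suc j + p + 1)" by (intro knot_mono[OF n]) auto
    hence "F p (knot p n r) = 0" using bx by (simp add: F_def pp_def)
    thus "(if intr p n r then aa p n p (Suc j) r * F p (knot p n r) else 0) = 0" by simp
  qed
  have s2: "(\<Sum>q\<le>p. bb p n p (Suc j) q * F q 1) = 0"
  proof (rule sum.neutral, rule ballI)
    fix q assume "q \<in> {..p}"
    show "bb p n p (Suc j) q * F q 1 = 0"
    proof (cases "bb p n p (Suc j) q = 0")
      case False
      hence "knot p n (Suc j + p + 1) = 1" using bb_supp[OF n] by blast
      thus ?thesis using bx x by simp
    qed simp
  qed
  have R: "Rep F p n p (Suc j) = 0" unfolding Rep_def using s1 s2 by simp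
  have "A_R \<alpha> p n i j = Rep F p n p (Suc j) / Gamma (2 - \<alpha>)"
    unfolding A_R_def F_def x_def using rl_near[OF n p al x[unfolded x_def], where p=p and i="Suc j"] by simp
  thus ?thesis using R by simp
qed


lemma near_entry:
  assumes n: "1 \<le> n" and p: "2 \<le> p" and al: "1 < \<alpha>" "\<alpha> < 2"
    and i: "1 \<le> i" "i \<le> n+p-2" and ij: "j \<le> i + p"
  shows "real n powr (- \<alpha>) * \<bar>A_R \<alpha> p n i j\<bar> \<le> CN \<alpha> p"
proof -
  define x where "x = greville p n (Suc i)"
  define N where "N = real n"
  define J where "J = Suc j"
  define F where "F = (\<lambda>m c. Bt \<alpha> m * (real m + 2 - \<alpha>) * (real m + 1 - \<alpha>) * pp (real m - \<alpha>) (c - x))"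
  have x: "0 < x" "x < 1" "1 / (N * real p) \<le> 1 - x" using grev_facts[OF n p i] by (simp_all add: x_def N_def)
  have N0: "0 < N" using n by (simp add: N_def)
  have p0: "0 < real p" "1 \<le> 2 * real p" using p by auto
  have G0: "0 < Gamma (2 - \<alpha>)" using al by (intro Gamma_real_pos) simp
  have KK0: "0 \<le> KK \<alpha> p" by (rule KK_nonneg)
  have "(real i - real j - real p) / real n \<le> x - knot p n (j+p+2)"
    unfolding x_def by (rule idx_R3[OF n _ i(2)]) (use p in simp)
  moreover have "(real j + real p - real i) / real n \<le> 2 * real p / real n"
    using ij n by (intro divide_right_mono) auto
  ultimately have bx: "knot p n (J+p+1) - x \<le> 2 * real p / N"
    unfolding J_def N_def by (simp add: diff_divide_distrib add_divide_distrib)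
  define X1 where "X1 = real (p+1) * N ^ p * (KK \<alpha> p * (2 * real p / N) powr (real p - \<alpha>))"
  define X2 where "X2 = (\<lambda>q. 3 ^ p * N ^ q * (KK \<alpha> p * ((2 * real p / N) ^ q * (1 / (N * real p)) powr (- \<alpha>))))"
  have T1: "\<bar>if intr p n r then aa p n p J r * F p (knot p n r) else 0\<bar> \<le> X1" if r: "r \<in> {J..J+p+1}" for r
  proof (cases "intr p n r")
    case True
    have a: "\<bar>aa p n p J r\<bar> \<le> real (p+1) * N ^ p" using aa_bound[OF n True] r by (auto simp: N_def)
    have "knot p n r \<le> knot p n (J+p+1)" using r by (intro knot_mono[OF n]) auto
    hence cx: "knot p n r - x \<le> 2 * real p / N" using bx by linarith
    have "\<bar>F p (knot p n r)\<bar> = \<bar>Bt \<alpha> p * (real p + 2 - \<alpha>) * (real p + 1 - \<alpha>)\<bar> * pp (real p - \<alpha>) (knot p n r - x)"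
      by (simp add: F_def abs_mult pp_nonneg)
    also have "\<dots> \<le> KK \<alpha> p * (2 * real p / N) powr (real p - \<alpha>)"
      by (intro mult_mono Kc_le pp_le cx) (use al p N0 in \<open>auto simp: pp_nonneg KK_nonneg\<close>)
    finally have f: "\<bar>F p (knot p n r)\<bar> \<le> KK \<alpha> p * (2 * real p / N) powr (real p - \<alpha>)" .
    have "\<bar>aa p n p J r * F p (knot p n r)\<bar> \<le> X1" unfolding X1_def abs_mult
      by (intro mult_mono a f) (use N0 in \<open>auto intro: mult_nonneg_nonneg\<close>)
    thus ?thesis using True by simp
  next
    case False thus ?thesis using N0 KK0 by (simp add: X1_def)
  qed
  have T2: "\<bar>bb p n p J q * F q 1\<bar> \<le> X2 q" if q: "q \<le> p" for q
  proof (cases "bb p n p J q = 0")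
    case True thus ?thesis using N0 KK0 by (simp add: X2_def)
  next
    case False
    hence "knot p n (J + p + 1) = 1" using bb_supp[OF n] by blast
    hence ux: "1 - x \<le> 2 * real p / N" using bx by simp
    have b: "\<bar>bb p n p J q\<bar> \<le> 3 ^ p * N ^ q" using bb_bound[OF n] by (simp add: N_def)
    have x1: "0 < 1 - x" using x by simp
    have "pp (real q - \<alpha>) (1 - x) = (1 - x) powr (real q + - \<alpha>)" using x1 by (simp add: pp_def)
    also have "\<dots> = (1 - x) ^ q * (1 - x) powr (- \<alpha>)" by (simp only: powr_add powr_realpow[OF x1])
    also have "\<dots> \<le> (2 * real p / N) ^ q * (1 / (N * real p)) powr (- \<alpha>)"
    proof (rule mult_mono)
      show "(1 - x) ^ q \<le> (2 * real p / N) ^ q" using x1 ux by (intro power_mono) auto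
      show "(1 - x) powr (- \<alpha>) \<le> (1 / (N * real p)) powr (- \<alpha>)"
        using x(3) al N0 p0 by (intro powr_mono2') auto
    qed (use N0 p0 in auto)
    finally have pb: "pp (real q - \<alpha>) (1 - x) \<le> (2 * real p / N) ^ q * (1 / (N * real p)) powr (- \<alpha>)" .
    have "\<bar>F q 1\<bar> = \<bar>Bt \<alpha> q * (real q + 2 - \<alpha>) * (real q + 1 - \<alpha>)\<bar> * pp (real q - \<alpha>) (1 - x)"
      by (simp add: F_def abs_mult pp_nonneg)
    also have "\<dots> \<le> KK \<alpha> p * ((2 * real p / N) ^ q * (1 / (N * real p)) powr (- \<alpha>))"
      by (intro mult_mono Kc_le pb q) (auto simp: pp_nonneg KK_nonneg)
    finally have f: "\<bar>F q 1\<bar> \<le> KK \<alpha> p * ((2 * real p / N) ^ q * (1 / (N * real p)) powr (- \<alpha>))" .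
    show ?thesis unfolding X2_def abs_mult by (intro mult_mono b f) (use N0 in \<open>auto intro: mult_nonneg_nonneg\<close>)
  qed
  have "\<bar>Rep F p n p J\<bar> \<le> (\<Sum>r=J..J+p+1. \<bar>if intr p n r then aa p n p J r * F p (knot p n r) else 0\<bar>)
        + (\<Sum>q\<le>p. \<bar>bb p n p J q * F q 1\<bar>)"
    unfolding Rep_def by (rule order.trans[OF abs_triangle_ineq add_mono[OF sum_abs sum_abs]])
  also have "\<dots> \<le> (\<Sum>r=J..J+p+1. X1) + (\<Sum>q\<le>p. X2 q)"
    by (intro add_mono sum_mono T1 T2) auto
  also have "\<dots> = real (p+2) * X1 + (\<Sum>q\<le>p. X2 q)" by simp
  finally have R: "\<bar>Rep F p n p J\<bar> \<le> real (p+2) * X1 + (\<Sum>q\<le>p. X2 q)" .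
  have e1: "N powr (- \<alpha>) * X1 \<le> real (p+1) * KK \<alpha> p * (2 * real p) ^ p"
  proof -
    have "N powr (- \<alpha>) * X1 = real (p+1) * KK \<alpha> p * (N powr (- \<alpha>) * N ^ p * (2 * real p / N) powr (real p - \<alpha>))"
      by (simp add: X1_def algebra_simps)
    also have "\<dots> = real (p+1) * KK \<alpha> p * (2 * real p) powr (real p - \<alpha>)"
      using N0 p0 by (simp add: H1)
    also have "\<dots> \<le> real (p+1) * KK \<alpha> p * (2 * real p) ^ p"
      by (intro mult_left_mono H3) (use p0 al KK0 in auto)
    finally show ?thesis .
  qed
  have e2: "N powr (- \<alpha>) * X2 q \<le> 3 ^ p * KK \<alpha> p * (2 * real p) ^ p * real p ^ 2" if q: "q \<le> p" for q
  proof -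
    have "N powr (- \<alpha>) * X2 q = 3 ^ p * KK \<alpha> p * (N powr (- \<alpha>) * N ^ q * (2 * real p / N) ^ q * (1 / (N * real p)) powr (- \<alpha>))"
      by (simp add: X2_def algebra_simps)
    also have "\<dots> = 3 ^ p * KK \<alpha> p * ((2 * real p) ^ q * real p powr \<alpha>)"
      using N0 p0 by (simp add: H2)
    also have "\<dots> \<le> 3 ^ p * KK \<alpha> p * ((2 * real p) ^ p * real p ^ 2)"
    proof (intro mult_left_mono mult_mono)
      show "(2 * real p) ^ q \<le> (2 * real p) ^ p" using q p0 by (intro power_increasing) auto
      show "real p powr \<alpha> \<le> real p ^ 2" using p al by (intro H4) auto
    qed (use KK0 in auto)
    finally show ?thesis by (simp add: algebra_simps)
  qed
  have "N powr (- \<alpha>) * \<bar>Rep F p n p J\<bar> \<le> N powr (- \<alpha>) * (real (p+2) * X1 + (\<Sum>q\<le>p. X2 q))"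
    by (intro mult_left_mono R) simp
  also have "\<dots> = real (p+2) * (N powr (- \<alpha>) * X1) + (\<Sum>q\<le>p. N powr (- \<alpha>) * X2 q)"
    by (simp add: distrib_left sum_distrib_left mult.left_commute)
  also have "\<dots> \<le> real (p+2) * (real (p+1) * KK \<alpha> p * (2 * real p) ^ p)
      + (\<Sum>q\<le>p. 3 ^ p * KK \<alpha> p * (2 * real p) ^ p * real p ^ 2)"
    by (intro add_mono mult_left_mono e1 sum_mono e2) auto
  also have "\<dots> = CN \<alpha> p * Gamma (2 - \<alpha>)"
    using G0 by (simp add: CN_def)
  finally have fin: "N powr (- \<alpha>) * \<bar>Rep F p n p J\<bar> \<le> CN \<alpha> p * Gamma (2 - \<alpha>)" .
  have "A_R \<alpha> p n i j = Rep F p n p J / Gamma (2 - \<alpha>)"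
    unfolding A_R_def F_def x_def J_def using rl_near[OF n p al x(1,2)[unfolded x_def], where p=p and i="Suc j"] by simp
  hence "real n powr (- \<alpha>) * \<bar>A_R \<alpha> p n i j\<bar> = (N powr (- \<alpha>) * \<bar>Rep F p n p J\<bar>) / Gamma (2 - \<alpha>)"
    using G0 by (simp add: N_def abs_divide)
  also have "\<dots> \<le> CN \<alpha> p" using fin G0 by (simp add: divide_le_eq)
  finally show ?thesis .
qed

definition CF :: "real \<Rightarrow> nat \<Rightarrow> real" where
  "CF \<alpha> p = (\<alpha> - 1) * \<alpha> * 2 ^ p * real (p+1) / Gamma (2 - \<alpha>)"

lemma far_entry:
  assumes n: "1 \<le> n" and p: "2 \<le> p" and al: "1 < \<alpha>" "\<alpha> < 2"
    and i: "1 \<le> i" "i \<le> n+p-2" and j: "j \<le> n+p-2" and ij: "i + p < j"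
  shows "real n powr (- \<alpha>) * \<bar>A_R \<alpha> p n i j\<bar> \<le> CF \<alpha> p * real (j - i - p) powr (- \<alpha> - 1)"
proof -
  define x where "x = greville p n (Suc i)"
  define N where "N = real n"
  define J where "J = Suc j"
  define a where "a = knot p n J"
  define b where "b = knot p n (J+p+1)"
  define d where "d = real (j - i - p)"
  define f where "f = (\<lambda>y. (\<alpha> - 1) * \<alpha> * (y - x) powr (- \<alpha> - 1) * bspline p n p J y)"
  have x: "0 < x" "x < 1" using grev_facts[OF n p i] by (simp_all add: x_def)
  have N0: "0 < N" using n by (simp add: N_def)
  have G0: "0 < Gamma (2 - \<alpha>)" using al by (intro Gamma_real_pos) simp
  have d1: "1 \<le> d" using ij by (simp add: d_def)
  have "(real j - real p - real i) / real n \<le> knot p n (j+1) - x"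
    unfolding x_def by (rule idx_R1[OF n _ j]) (use p in simp)
  moreover have "real j - real p - real i = d" using ij by (simp add: d_def)
  ultimately have ax: "d / N \<le> a - x" by (simp add: a_def J_def N_def)
  have dN: "0 < d / N" using d1 N0 by simp
  have xa: "x < knot p n J" using ax dN by (simp add: a_def)
  obtain W where Wint: "(f has_integral W) {a..1}"
      and A: "rl_right_deriv \<alpha> (bspline p n p J) x = W / Gamma (2 - \<alpha>)"
    using rl_far[OF n al x(1) xa, where k=p] unfolding f_def a_def by blast
  have ab: "a \<le> b" "b \<le> 1" using knot_mono[OF n] knot_le1[OF n] by (auto simp: a_def b_def)
  have ba: "b - a \<le> real (p+1) / N"
    using knot_lip[OF n, of J "J+p+1" p] by (simp add: a_def b_def N_def)
  have fint: "f integrable_on {a..b}"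
    by (rule integrable_subinterval_real[OF has_integral_integrable[OF Wint]]) (use ab in auto)
  have f0: "(f has_integral 0) {b..1}"
  proof (rule has_integral_is_0)
    fix y assume "y \<in> {b..1}"
    hence "bspline p n p J y = 0" using bspline_supp[OF n] by (simp add: b_def)
    thus "f y = 0" by (simp add: f_def)
  qed
  have "(f has_integral (integral {a..b} f + 0)) {a..1}"
    by (rule has_integral_combine[OF ab fint[THEN integrable_integral] f0])
  hence WI: "W = integral {a..b} f" using Wint by (simp add: has_integral_unique)
  define B where "B = (\<alpha> - 1) * \<alpha> * (d / N) powr (- \<alpha> - 1) * 2 ^ p"
  have B0: "0 \<le> B" using al by (simp add: B_def)
  have fb: "norm (f y) \<le> B" if y: "y \<in> cbox a b" for y
  proof -
    have yx: "d / N \<le> y - x" using y ax by (auto simp: cbox_interval)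
    have "(y - x) powr (- \<alpha> - 1) \<le> (d / N) powr (- \<alpha> - 1)"
      by (rule powr_mono2') (use yx dN al in auto)
    moreover have "\<bar>bspline p n p J y\<bar> \<le> 2 ^ p" by (rule bspline_bound[OF n])
    ultimately have "(y - x) powr (- \<alpha> - 1) * \<bar>bspline p n p J y\<bar> \<le> (d / N) powr (- \<alpha> - 1) * 2 ^ p"
      by (intro mult_mono) auto
    hence "(\<alpha> - 1) * \<alpha> * ((y - x) powr (- \<alpha> - 1) * \<bar>bspline p n p J y\<bar>) \<le> (\<alpha> - 1) * \<alpha> * ((d / N) powr (- \<alpha> - 1) * 2 ^ p)"
      using al by (intro mult_left_mono) auto
    thus ?thesis using al by (simp add: f_def B_def abs_mult mult.assoc)
  qed
  have "norm (integral {a..b} f) \<le> B * Henstock_Kurzweil_Integration.content (cbox a b)"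
    by (rule has_integral_bound[OF B0 _ fb]) (use integrable_integral[OF fint] in \<open>simp add: cbox_interval\<close>)
  hence Wb: "\<bar>W\<bar> \<le> B * (b - a)" using ab WI by (simp add: cbox_interval)
  also have "\<dots> \<le> B * (real (p+1) / N)" by (rule mult_left_mono[OF ba B0])
  finally have Wb2: "\<bar>W\<bar> \<le> B * (real (p+1) / N)" .
  have "N powr (- \<alpha>) * \<bar>W\<bar> \<le> N powr (- \<alpha>) * (B * (real (p+1) / N))"
    by (intro mult_left_mono Wb2) simp
  also have "\<dots> = (\<alpha> - 1) * \<alpha> * 2 ^ p * real (p+1) * (N powr (- \<alpha>) * (d / N) powr (- \<alpha> - 1) * (1 / N))"
    using N0 by (simp add: B_def field_simps)
  also have "\<dots> = (\<alpha> - 1) * \<alpha> * 2 ^ p * real (p+1) * d powr (- \<alpha> - 1)"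
    by (subst H5) (use N0 d1 in auto)
  finally have fin: "N powr (- \<alpha>) * \<bar>W\<bar> \<le> (\<alpha> - 1) * \<alpha> * 2 ^ p * real (p+1) * d powr (- \<alpha> - 1)" .
  have "A_R \<alpha> p n i j = W / Gamma (2 - \<alpha>)"
    using A unfolding A_R_def x_def J_def by simp
  hence "real n powr (- \<alpha>) * \<bar>A_R \<alpha> p n i j\<bar> = (N powr (- \<alpha>) * \<bar>W\<bar>) / Gamma (2 - \<alpha>)"
    using G0 by (simp add: N_def abs_divide)
  also have "\<dots> \<le> ((\<alpha> - 1) * \<alpha> * 2 ^ p * real (p+1) * d powr (- \<alpha> - 1)) / Gamma (2 - \<alpha>)"
    using fin G0 by (simp add: divide_right_mono)
  also have "\<dots> = CF \<alpha> p * real (j - i - p) powr (- \<alpha> - 1)"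
    by (simp add: CF_def d_def)
  finally show ?thesis .
qed

lemma sum_inj_le_suminf:
  fixes f :: "nat \<Rightarrow> real"
  assumes "finite S" "inj_on g S" "summable f" "\<And>d. 0 \<le> f d"
  shows "(\<Sum>s\<in>S. f (g s)) \<le> suminf f"
proof -
  have "(\<Sum>s\<in>S. f (g s)) = (\<Sum>d\<in>g ` S. f d)" using assms(2) by (simp add: sum.reindex)
  also have "\<dots> \<le> suminf f" by (rule sum_le_suminf) (use assms in auto)
  finally show ?thesis .
qed

lemma card_band:
  fixes j p m :: nat
  shows "card {i\<in>{1..m}. j \<le> i + p \<and> i \<le> j + p} \<le> 2 * p + 1"
proof -
  have "{i\<in>{1..m}. j \<le> i + p \<and> i \<le> j + p} \<subseteq> {j - p..j + p}" by auto
  hence "card {i\<in>{1..m}. j \<le> i + p \<and> i \<le> j + p} \<le> card {j - p..j + p}" by (intro card_mono) auto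
  also have "\<dots> \<le> 2 * p + 1" by simp
  finally show ?thesis .
qed

lemma band_sum:
  fixes CN :: real
  assumes "0 \<le> CN"
  shows "(\<Sum>i=1..m. if j \<le> i + p \<and> i \<le> j + p then CN else 0) \<le> real (2 * p + 1) * CN"
proof -
  have "(\<Sum>i=1..m. if j \<le> i + p \<and> i \<le> j + p then CN else 0) = (\<Sum>i\<in>{i\<in>{1..m}. j \<le> i + p \<and> i \<le> j + p}. CN)"
    by (rule sum.inter_filter[symmetric]) simp
  also have "\<dots> = real (card {i\<in>{1..m}. j \<le> i + p \<and> i \<le> j + p}) * CN" by simp
  also have "\<dots> \<le> real (2 * p + 1) * CN"
  proof (rule mult_right_mono[OF _ assms])
    have "card {i\<in>{1..m}. j \<le> i + p \<and> i \<le> j + p} \<le> 2 * p + 1" by (rule card_band)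
    thus "real (card {i\<in>{1..m}. j \<le> i + p \<and> i \<le> j + p}) \<le> real (2 * p + 1)" by linarith
  qed
  finally show ?thesis .
qed

lemma band_sum':
  fixes CN :: real
  assumes "0 \<le> CN"
  shows "(\<Sum>j=1..m. if j \<le> i + p \<and> i \<le> j + p then CN else 0) \<le> real (2 * p + 1) * CN"
proof -
  have "(\<Sum>j=1..m. if j \<le> i + p \<and> i \<le> j + p then CN else 0) = (\<Sum>j=1..m. if i \<le> j + p \<and> j \<le> i + p then CN else 0)"
    by (rule sum.cong) auto
  also have "\<dots> \<le> real (2 * p + 1) * CN" by (rule band_sum[OF assms])
  finally show ?thesis .
qed


lemma CN_nonneg: "\<alpha> < 2 \<Longrightarrow> 0 \<le> CN \<alpha> p"
  unfolding CN_def using KK_nonneg[of \<alpha> p] Gamma_real_pos[of "2 - \<alpha>"]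
  by (intro divide_nonneg_pos add_nonneg_nonneg mult_nonneg_nonneg) auto

lemma CF_nonneg: "1 < \<alpha> \<Longrightarrow> \<alpha> < 2 \<Longrightarrow> 0 \<le> CF \<alpha> p"
  unfolding CF_def using Gamma_real_pos[of "2 - \<alpha>"]
  by (intro divide_nonneg_pos mult_nonneg_nonneg) auto

lemma entry_bound:
  assumes n: "1 \<le> n" and p: "2 \<le> p" and al: "1 < \<alpha>" "\<alpha> < 2"
    and i: "i \<in> {1..n+p-2}" and j: "j \<in> {1..n+p-2}"
  shows "\<bar>real n powr (- \<alpha>) * A_R \<alpha> p n i j\<bar>
    \<le> (if j \<le> i + p \<and> i \<le> j + p then CN \<alpha> p else 0) + CF \<alpha> p * real (j - i - p) powr (- \<alpha> - 1)"
proof -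
  have e: "\<bar>real n powr (- \<alpha>) * A_R \<alpha> p n i j\<bar> = real n powr (- \<alpha>) * \<bar>A_R \<alpha> p n i j\<bar>"
    by (simp add: abs_mult)
  have CN0: "0 \<le> CN \<alpha> p" by (rule CN_nonneg[OF al(2)])
  have CF0: "0 \<le> CF \<alpha> p" by (rule CF_nonneg[OF al])
  have t0: "0 \<le> CF \<alpha> p * real (j - i - p) powr (- \<alpha> - 1)" using CF0 by simp
  consider "j + p \<le> i" | "i + p < j" | "j \<le> i + p" "i < j + p" by linarith
  then show ?thesis
  proof cases
    case 1
    hence "A_R \<alpha> p n i j = 0" using zero_entry[OF n p al, of i j] i by auto
    thus ?thesis using t0 CN0 by simp
  next
    case 2
    have "real n powr (- \<alpha>) * \<bar>A_R \<alpha> p n i j\<bar> \<le> CF \<alpha> p * real (j - i - p) powr (- \<alpha> - 1)"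
      using far_entry[OF n p al, of i j] i j 2 by auto
    moreover have "\<not> (j \<le> i + p)" using 2 by simp
    ultimately show ?thesis unfolding e by simp
  next
    case 3
    have "real n powr (- \<alpha>) * \<bar>A_R \<alpha> p n i j\<bar> \<le> CN \<alpha> p"
      using near_entry[OF n p al, of i j] i 3 by auto
    thus ?thesis unfolding e using 3 t0 by simp
  qed
qed

lemma tail_sum:
  fixes f :: "nat \<Rightarrow> real"
  assumes f0: "f 0 = 0" "\<And>d. 0 \<le> f d" and fs: "summable f"
  shows "(\<Sum>j=1..m. f (j - i - p)) \<le> suminf f" and "(\<Sum>i=1..m. f (j - i - p)) \<le> suminf f"
proof -
  have "(\<Sum>j=1..m. f (j - i - p)) = (\<Sum>j\<in>{j\<in>{1..m}. i + p < j}. f (j - i - p))"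
  proof (rule sum.mono_neutral_right)
    show "\<forall>x\<in>{1..m} - {j\<in>{1..m}. i + p < j}. f (x - i - p) = 0"
    proof
      fix x assume "x \<in> {1..m} - {j\<in>{1..m}. i + p < j}"
      hence "x - i - p = 0" by auto
      thus "f (x - i - p) = 0" using f0 by simp
    qed
  qed auto
  also have "\<dots> \<le> suminf f"
    by (rule sum_inj_le_suminf[OF _ _ fs f0(2)]) (auto simp: inj_on_def)
  finally show "(\<Sum>j=1..m. f (j - i - p)) \<le> suminf f" .
  have "(\<Sum>i=1..m. f (j - i - p)) = (\<Sum>i\<in>{i\<in>{1..m}. i + p < j}. f (j - i - p))"
  proof (rule sum.mono_neutral_right)
    show "\<forall>x\<in>{1..m} - {i\<in>{1..m}. i + p < j}. f (j - x - p) = 0"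
    proof
      fix x assume "x \<in> {1..m} - {i\<in>{1..m}. i + p < j}"
      hence "j - x - p = 0" by auto
      thus "f (j - x - p) = 0" using f0 by simp
    qed
  qed auto
  also have "\<dots> \<le> suminf f"
    by (rule sum_inj_le_suminf[OF _ _ fs f0(2)]) (auto simp: inj_on_def)
  finally show "(\<Sum>i=1..m. f (j - i - p)) \<le> suminf f" .
qed

theorem lemma6p3:
  fixes \<alpha> :: real and p :: nat
  assumes "1 < \<alpha>" and "\<alpha> < 2" and "2 \<le> p"
  shows "\<exists>C. \<forall>n\<ge>1.
           mat_norm_1 (n + p - 2) (\<lambda>i j. real n powr (- \<alpha>) * A_R \<alpha> p n i j) \<le> C \<and>
           mat_norm_2 (n + p - 2) (\<lambda>i j. real n powr (- \<alpha>) * A_R \<alpha> p n i j) \<le> C \<and>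
           mat_norm_inf (n + p - 2) (\<lambda>i j. real n powr (- \<alpha>) * A_R \<alpha> p n i j) \<le> C"
proof -
  note al = assms(1,2) and p = assms(3)
  define f where "f = (\<lambda>d::nat. real d powr (- \<alpha> - 1))"
  have fs: "summable f" unfolding f_def using al by (subst summable_real_powr_iff) auto
  have f0: "f 0 = 0" "\<And>d. 0 \<le> f d" by (simp_all add: f_def)
  define C where "C = real (2 * p + 1) * CN \<alpha> p + CF \<alpha> p * suminf f"
  have CN0: "0 \<le> CN \<alpha> p" by (rule CN_nonneg[OF al(2)])
  have CF0: "0 \<le> CF \<alpha> p" by (rule CF_nonneg[OF al])
  show ?thesis
  proof (intro exI allI impI)
    fix n :: nat assume n: "1 \<le> n"
    define m where "m = n + p - 2"
    have m1: "1 \<le> m" using n p by (simp add: m_def)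
    define E where "E = (\<lambda>i j. (if j \<le> i + p \<and> i \<le> j + p then CN \<alpha> p else 0) + CF \<alpha> p * f (j - i - p))"
    have ent: "\<bar>real n powr (- \<alpha>) * A_R \<alpha> p n i j\<bar> \<le> E i j" if "i \<in> {1..m}" "j \<in> {1..m}" for i j
      using entry_bound[OF n p al, of i j] that by (simp add: E_def f_def m_def)
    have row: "(\<Sum>j=1..m. \<bar>real n powr (- \<alpha>) * A_R \<alpha> p n i j\<bar>) \<le> C" if i: "i \<in> {1..m}" for i
    proof -
      have "(\<Sum>j=1..m. \<bar>real n powr (- \<alpha>) * A_R \<alpha> p n i j\<bar>) \<le> (\<Sum>j=1..m. E i j)"
        by (rule sum_mono) (use ent i in auto)
      also have "\<dots> = (\<Sum>j=1..m. if j \<le> i + p \<and> i \<le> j + p then CN \<alpha> p else 0) + CF \<alpha> p * (\<Sum>j=1..m. f (j - i - p))"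
        by (simp add: E_def sum.distrib sum_distrib_left)
      also have "\<dots> \<le> C" unfolding C_def
        by (intro add_mono band_sum' CN0 mult_left_mono tail_sum(1)[OF f0 fs] CF0)
      finally show ?thesis .
    qed
    have col: "(\<Sum>i=1..m. \<bar>real n powr (- \<alpha>) * A_R \<alpha> p n i j\<bar>) \<le> C" if j: "j \<in> {1..m}" for j
    proof -
      have "(\<Sum>i=1..m. \<bar>real n powr (- \<alpha>) * A_R \<alpha> p n i j\<bar>) \<le> (\<Sum>i=1..m. E i j)"
        by (rule sum_mono) (use ent j in auto)
      also have "\<dots> = (\<Sum>i=1..m. if j \<le> i + p \<and> i \<le> j + p then CN \<alpha> p else 0) + CF \<alpha> p * (\<Sum>i=1..m. f (j - i - p))"
        by (simp add: E_def sum.distrib sum_distrib_left)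
      also have "\<dots> \<le> C" unfolding C_def
        by (intro add_mono band_sum CN0 mult_left_mono tail_sum(2)[OF f0 fs] CF0)
      finally show ?thesis .
    qed
    show "mat_norm_1 (n + p - 2) (\<lambda>i j. real n powr (- \<alpha>) * A_R \<alpha> p n i j) \<le> C \<and>
          mat_norm_2 (n + p - 2) (\<lambda>i j. real n powr (- \<alpha>) * A_R \<alpha> p n i j) \<le> C \<and>
          mat_norm_inf (n + p - 2) (\<lambda>i j. real n powr (- \<alpha>) * A_R \<alpha> p n i j) \<le> C"
      using norms_bound[OF m1, of "\<lambda>i j. real n powr (- \<alpha>) * A_R \<alpha> p n i j" C] row col
      unfolding m_def by blast
  qed
qed

end
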